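(* Let $t_f>0$ and let $\bar{\boldsymbol{q}}=(p_x,p_y,c_0)\in\mathbb{R}^3$. Let $\boldsymbol{Z}(t,\bar{\boldsymbol{q}})=(X(t,\bar{\boldsymbol{q}}),Y(t,\bar{\boldsymbol{q}}),\Theta(t,\bar{\boldsymbol{q}}))$ be the solution of the backward system $$\dot X=-\cos\Theta,\qquad \dot Y=-\sin\Theta,\qquad \dot\Theta=-\big[p_xY-p_yX+c_0\big],$$ with $(X(0),Y(0),\Theta(0))=(0,0,-\pi/2)$. If there are two different instants $t_1,t_2\in(0,t_f)$ such that the velocity vectors $[\cos\Theta(t_1,\bar{\boldsymbol{q}}),\sin\Theta(t_1,\bar{\boldsymbol{q}})]$ and $[\cos\Theta(t_2,\bar{\boldsymbol{q}}),\sin\Theta(t_2,\bar{\boldsymbol{q}})]$ are colinear, i.e. $$\frac{Y(t_1,\bar{\boldsymbol{q}})-Y(t_2,\bar{\boldsymbol{q}})}{X(t_1,\bar{\boldsymbol{q}})-X(t_2,\bar{\boldsymbol{q}})}=\tan\Theta(t_1,\bar{\boldsymbol{q}})=\tan\Theta(t_2,\bar{\boldsymbol{q}}),$$ then the extremal trajectory $\boldsymbol{Z}(t,\bar{\boldsymbol{q}})$, $t\in[0,t_f]$, is not optimal for the minimum-effort control problem (MECP) described in the context.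
   Context: Kinematics: $\dot x=\cos\theta$, $\dot y=\sin\theta$, $\dot\theta=u$, with state $(x,y,\theta)\in\mathbb{R}^2\times[0,2\pi)$ and measurable control $u$. The MECP: given an initial state $(x_0,y_0,\theta_0)$, a fixed terminal time $t_f>0$, steer the system on $[0,t_f]$ from the initial state to the final state $(0,0,-\pi/2)$ while minimizing $J=\int_0^{t_f}\tfrac12u^2\,dt$. By the Pontryagin maximum principle, extremals satisfy $u(t)=p_\theta(t)=p_xy(t)-p_yx(t)+c_0$ with constants $p_x,p_y,c_0$. The backward system in the claim (with parameter $\boldsymbol{q}=(p_x,p_y,c_0)$) generates, upon time reversal, extremal trajectories of the MECP ending at $(0,0,-\pi/2)$; its extremal control is $U(t,\boldsymbol{q})=p_xY(t,\boldsymbol{q})-p_yX(t,\boldsymbol{q})+c_0$. The trajectory $\boldsymbol{Z}(t,\bar{\boldsymbol q})$, $t\in[0,t_f]$, is regarded (traversed in reverse time) as a candidate solution of the MECP from the initial state $\boldsymbol{Z}(t_f,\bar{\boldsymbol q})$ with duration $t_f$. *)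

theory Defs
  imports "HOL-Analysis.Analysis"
begin

text \<open>The angle is a real lift of the angle in [0,2pi); the terminal heading -pi/2 is
  therefore imposed modulo 2pi.\<close>

definition mecp_theta :: "real \<Rightarrow> (real \<Rightarrow> real) \<Rightarrow> real \<Rightarrow> real" where
  "mecp_theta th0 u t = th0 + (LINT s:{0..t}|lborel. u s)"

definition mecp_x :: "real \<Rightarrow> real \<Rightarrow> (real \<Rightarrow> real) \<Rightarrow> real \<Rightarrow> real" where
  "mecp_x x0 th0 u t = x0 + (LINT s:{0..t}|lborel. cos (mecp_theta th0 u s))"

definition mecp_y :: "real \<Rightarrow> real \<Rightarrow> (real \<Rightarrow> real) \<Rightarrow> real \<Rightarrow> real" where
  "mecp_y y0 th0 u t = y0 + (LINT s:{0..t}|lborel. sin (mecp_theta th0 u s))"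

definition mecp_cost :: "real \<Rightarrow> (real \<Rightarrow> real) \<Rightarrow> real" where
  "mecp_cost tf u = (LINT s:{0..tf}|lborel. (u s)\<^sup>2 / 2)"

definition mecp_admissible :: "real \<Rightarrow> (real \<Rightarrow> real) \<Rightarrow> bool" where
  "mecp_admissible tf u \<longleftrightarrow>
     set_integrable lborel {0..tf} u \<and> set_integrable lborel {0..tf} (\<lambda>s. (u s)\<^sup>2)"

definition mecp_steers :: "real \<Rightarrow> real \<times> real \<times> real \<Rightarrow> (real \<Rightarrow> real) \<Rightarrow> bool" where
  "mecp_steers tf z0 u \<longleftrightarrow> (case z0 of (x0, y0, th0) \<Rightarrow>
     mecp_admissible tf u \<and>
     mecp_x x0 th0 u tf = 0 \<and> mecp_y y0 th0 u tf = 0 \<and>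
     (\<exists>k::int. mecp_theta th0 u tf = - pi / 2 + 2 * pi * of_int k))"

definition mecp_optimal :: "real \<Rightarrow> real \<times> real \<times> real \<Rightarrow> (real \<Rightarrow> real) \<Rightarrow> bool" where
  "mecp_optimal tf z0 u \<longleftrightarrow>
     mecp_steers tf z0 u \<and> (\<forall>v. mecp_steers tf z0 v \<longrightarrow> mecp_cost tf u \<le> mecp_cost tf v)"

end

theory Submission
  imports Defs "HOL-Analysis.Analysis"
begin

lemma lip_mvt:
  fixes f f' :: "real \<Rightarrow> real"
  assumes "p \<le> q" "continuous_on {p..q} f"
    "\<And>z. p < z \<Longrightarrow> z < q \<Longrightarrow> (f has_real_derivative f' z) (at z)"
    "\<And>z. p < z \<Longrightarrow> z < q \<Longrightarrow> \<bar>f' z\<bar> \<le> B"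
  shows "\<bar>f q - f p\<bar> \<le> B * (q - p)"
proof (cases "p = q")
  case True then show ?thesis by simp
next
  case False
  then have lt: "p < q" using assms(1) by simp
  obtain l z where z: "p < z" "z < q" "DERIV f z :> l" "f q - f p = (q - p) * l"
    using MVT[OF lt assms(2)] assms(3) real_differentiable_def by blast
  have "l = f' z" using DERIV_unique[OF z(3) assms(3)[OF z(1,2)]] .
  then have "\<bar>l\<bar> \<le> B" using assms(4)[OF z(1,2)] by simp
  then show ?thesis using z(4) lt by (simp add: abs_mult mult.commute mult_left_mono)
qed

lemma lip_mvt2:
  fixes f f' :: "real \<Rightarrow> real"
  assumes "continuous_on {p..q} f" "r \<in> {p..q}" "s \<in> {p..q}"
    "\<And>z. p < z \<Longrightarrow> z < q \<Longrightarrow> (f has_real_derivative f' z) (at z)"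
    "\<And>z. p < z \<Longrightarrow> z < q \<Longrightarrow> \<bar>f' z\<bar> \<le> B"
  shows "\<bar>f s - f r\<bar> \<le> B * \<bar>s - r\<bar>"
proof (cases "r \<le> s")
  case True
  have "\<bar>f s - f r\<bar> \<le> B * (s - r)"
    by (rule lip_mvt[OF True continuous_on_subset[OF assms(1)], of f']) (use assms in auto)
  then show ?thesis using True by simp
next
  case False
  have "\<bar>f r - f s\<bar> \<le> B * (r - s)"
    by (rule lip_mvt[of s r _ f']) (use False assms in \<open>auto intro: continuous_on_subset[OF assms(1)]\<close>)
  then show ?thesis using False by (simp add: abs_minus_commute)
qed

lemma cont_bound:
  fixes f :: "real \<Rightarrow> real"
  assumes "continuous_on {p..q} f"
  obtains B where "B > 0" "\<And>s. s \<in> {p..q} \<Longrightarrow> \<bar>f s\<bar> \<le> B"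
proof -
  have "compact (f ` {p..q})" by (rule compact_continuous_image[OF assms compact_Icc])
  then have "bounded (f ` {p..q})" by (rule compact_imp_bounded)
  then obtain B where "B > 0" "\<forall>y\<in>f ` {p..q}. norm y \<le> B" using bounded_pos by metis
  then show ?thesis using that by auto
qed

lemma zero_by_small:
  fixes z C dz :: real
  assumes "dz > 0" "\<And>e. 0 < e \<Longrightarrow> e < dz \<Longrightarrow> \<bar>z\<bar> \<le> C * e"
  shows "z = 0"
proof (rule ccontr)
  assume "z \<noteq> 0"
  then have zp: "\<bar>z\<bar> > 0" by simp
  define e where "e = min (dz/2) (\<bar>z\<bar> / (2 * (\<bar>C\<bar> + 1)))"
  have e0: "e > 0" using assms(1) zp by (simp add: e_def)
  have e1: "e < dz" using assms(1) by (simp add: e_def)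
  have "\<bar>z\<bar> \<le> C * e" using assms(2)[OF e0 e1] .
  also have "\<dots> \<le> (\<bar>C\<bar> + 1) * e" using e0 by (intro mult_right_mono) auto
  also have "\<dots> \<le> (\<bar>C\<bar> + 1) * (\<bar>z\<bar> / (2 * (\<bar>C\<bar> + 1)))"
    by (intro mult_left_mono) (auto simp: e_def)
  also have "\<dots> = \<bar>z\<bar> / 2" by (simp add: field_simps)
  finally show False using zp by simp
qed



lemma quad_deriv:
  fixes f :: "'a::real_normed_vector \<Rightarrow> real"
  assumes L: "bounded_linear L" and r: "r > 0"
    and q: "\<And>h. norm h < r \<Longrightarrow> \<bar>f h - f 0 - L h\<bar> \<le> C * (norm h)\<^sup>2"
  shows "(f has_derivative L) (at 0)"
  unfolding has_derivative_iff_norm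
proof (intro conjI L)
  show "((\<lambda>y. norm (f y - f 0 - L (y - 0)) / norm (y - 0)) \<longlongrightarrow> 0) (at 0)"
  proof (rule Lim_null_comparison)
    show "\<forall>\<^sub>F y in at 0. norm (norm (f y - f 0 - L (y - 0)) / norm (y - 0)) \<le> \<bar>C\<bar> * norm y"
    proof -
      have "\<forall>\<^sub>F y in at 0. norm y < r"
        using r by (auto simp: eventually_at dist_norm intro!: exI[of _ r])
      then show ?thesis
      proof (rule eventually_mono)
        fix y :: 'a assume y: "norm y < r"
        have "\<bar>f y - f 0 - L y\<bar> \<le> C * (norm y)\<^sup>2" using q[OF y] .
        also have "\<dots> \<le> \<bar>C\<bar> * (norm y)\<^sup>2" by (intro mult_right_mono) auto
        finally have "\<bar>f y - f 0 - L y\<bar> / norm y \<le> \<bar>C\<bar> * (norm y)\<^sup>2 / norm y"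
          by (intro divide_right_mono) auto
        also have "\<dots> \<le> \<bar>C\<bar> * norm y" by (cases "norm y = 0") (simp_all add: power2_eq_square)
        finally show "norm (norm (f y - f 0 - L (y - 0)) / norm (y - 0)) \<le> \<bar>C\<bar> * norm y"
          by simp
      qed
    qed
    show "((\<lambda>y. \<bar>C\<bar> * norm y) \<longlongrightarrow> 0) (at 0)"
      by (intro tendsto_eq_intros) (auto simp: tendsto_norm_zero_iff)
  qed
qed

lemma taylor1:
  fixes f f' :: "real \<Rightarrow> real"
  assumes df: "\<And>z. (f has_real_derivative f' z) (at z)"
    and lf: "\<And>z. \<bar>f' z - f' t\<bar> \<le> M * \<bar>z - t\<bar>"
  shows "\<bar>f (t + p) - f t - f' t * p\<bar> \<le> M * p\<^sup>2"
proof -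
  define g where "g z = f z - f' t * z" for z
  have dg: "(g has_real_derivative f' z - f' t) (at z)" for z
    unfolding g_def[abs_def] by (auto intro!: derivative_eq_intros df)
  have cg: "continuous_on S g" for S
    by (rule DERIV_continuous_on[where D="\<lambda>z. f' z - f' t"]) (rule has_field_derivative_at_within[OF dg])
  have M0: "M \<ge> 0" using lf[of "t+1"] by simp
  have bnd: "\<bar>f' z - f' t\<bar> \<le> M * \<bar>p\<bar>" if "min t (t+p) < z" "z < max t (t+p)" for z
  proof -
    have "\<bar>z - t\<bar> \<le> \<bar>p\<bar>" using that by (auto simp: min_def max_def split: if_splits)
    then show ?thesis using lf[of z] M0 by (meson mult_left_mono order_trans)
  qed
  have A: "\<bar>g (t + p) - g t\<bar> \<le> (M * \<bar>p\<bar>) * \<bar>t + p - t\<bar>"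
  proof (rule lip_mvt2[OF cg[of "{min t (t+p)..max t (t+p)}"], where f'="\<lambda>z. f' z - f' t"])
    show "t \<in> {min t (t + p)..max t (t + p)}" "t + p \<in> {min t (t + p)..max t (t + p)}" by auto
    show "(g has_real_derivative f' z - f' t) (at z)" for z by (rule dg)
    show "\<bar>f' z - f' t\<bar> \<le> M * \<bar>p\<bar>" if "min t (t + p) < z" "z < max t (t + p)" for z
      by (rule bnd[OF that])
  qed
  have B: "g (t + p) - g t = f (t + p) - f t - f' t * p" by (simp add: g_def algebra_simps)
  have C: "(M * \<bar>p\<bar>) * \<bar>t + p - t\<bar> = M * p\<^sup>2"
  proof -
    have "\<bar>p\<bar> * \<bar>p\<bar> = p\<^sup>2" by (simp add: power2_eq_square abs_mult_self_eq)
    then show ?thesis by (simp add: mult.assoc)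
  qed
  show ?thesis using A unfolding B C .
qed

lemma sin_lip: fixes z t :: real shows "\<bar>sin z - sin t\<bar> \<le> 1 * \<bar>z - t\<bar>"
proof (rule lip_mvt2[of "min z t" "max z t" sin t z cos 1])
  show "continuous_on {min z t..max z t} sin" by (rule continuous_on_sin_real)
  show "t \<in> {min z t..max z t}" "z \<in> {min z t..max z t}" by auto
  show "(sin has_real_derivative cos w) (at w)" for w by (rule DERIV_sin)
  show "\<bar>cos w\<bar> \<le> 1" for w :: real by (rule abs_cos_le_one)
qed

lemma cos_lip: fixes z t :: real shows "\<bar>cos z - cos t\<bar> \<le> 1 * \<bar>z - t\<bar>"
proof (rule lip_mvt2[of "min z t" "max z t" cos t z "\<lambda>z. - sin z" 1])
  show "continuous_on {min z t..max z t} cos" by (rule continuous_on_cos_real)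
  show "t \<in> {min z t..max z t}" "z \<in> {min z t..max z t}" by auto
  show "(cos has_real_derivative - sin w) (at w)" for w by (rule DERIV_cos)
  show "\<bar>- sin w\<bar> \<le> 1" for w :: real by simp
qed

lemma cos_taylor: fixes t p :: real shows "\<bar>cos (t + p) - cos t - (- sin t) * p\<bar> \<le> 1 * p\<^sup>2"
proof (rule taylor1[where f'="\<lambda>z. - sin z"])
  show "\<And>z. (cos has_real_derivative - sin z) (at z)" by (rule DERIV_cos)
  show "\<bar>- sin z - - sin t\<bar> \<le> 1 * \<bar>z - t\<bar>" for z using sin_lip[of z t] by linarith
qed

lemma sin_taylor: fixes t p :: real shows "\<bar>sin (t + p) - sin t - cos t * p\<bar> \<le> 1 * p\<^sup>2"
proof (rule taylor1[where f'="\<lambda>z. cos z"])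
  show "\<And>z. (sin has_real_derivative cos z) (at z)" by (rule DERIV_sin)
  show "\<bar>cos z - cos t\<bar> \<le> 1 * \<bar>z - t\<bar>" for z using cos_lip[of z t] by linarith
qed

lemma meas_int:
  fixes f :: "real \<Rightarrow> real"
  assumes f: "f \<in> borel_measurable borel" and B: "\<And>s. s \<in> {p..q} \<Longrightarrow> \<bar>f s\<bar> \<le> B"
  shows "set_integrable lborel {p..q} f" "f integrable_on {p..q}"
    "(LINT s:{p..q}|lborel. f s) = integral {p..q} f"
proof -
  show si: "set_integrable lborel {p..q} f"
    unfolding set_integrable_def
    by (rule integrableI_bounded_set_indicator[where B=B]) (use f B in \<open>auto, cases "p \<le> q", auto\<close>)
  show "f integrable_on {p..q}" "(LINT s:{p..q}|lborel. f s) = integral {p..q} f"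
    using set_borel_integral_eq_integral[OF si] by auto
qed

lemma intbound:
  fixes f :: "real \<Rightarrow> real"
  assumes "0 \<le> T" "f integrable_on {0..T}" "\<And>s. s \<in> {0..T} \<Longrightarrow> \<bar>f s\<bar> \<le> B"
  shows "\<bar>integral {0..T} f\<bar> \<le> T * B"
proof -
  have "norm (integral {0..T} f) \<le> integral {0..T} (\<lambda>s. B)"
    by (rule integral_norm_bound_integral) (use assms in auto)
  then show ?thesis using assms(1) by simp
qed

lemma int_sum_lin:
  fixes g :: "'i \<Rightarrow> real \<Rightarrow> real"
  assumes "finite I" "\<And>i. i \<in> I \<Longrightarrow> g i integrable_on S"
  shows "integral S (\<lambda>s. \<Sum>i\<in>I. c i * g i s) = (\<Sum>i\<in>I. c i * integral S (g i))"
proof -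
  have "integral S (\<lambda>s. \<Sum>i\<in>I. c i * g i s) = (\<Sum>i\<in>I. integral S (\<lambda>s. c i * g i s))"
    by (rule integral_sum) (use assms in \<open>auto intro: integrable_on_mult_right\<close>)
  then show ?thesis by simp
qed

type_synonym R4 = "real \<times> real \<times> real \<times> real"

lemma card_R4: "card (Basis :: R4 set) = 4"
  by simp

locale pert =
  fixes T Vb Kw :: real and Th v :: "real \<Rightarrow> real" and Wf wf :: "R4 \<Rightarrow> real \<Rightarrow> real"
  assumes T: "0 < T"
    and cTh: "continuous_on {0..T} Th"
    and mv: "v \<in> borel_measurable borel"
    and vb: "\<And>s. s \<in> {0..T} \<Longrightarrow> \<bar>v s\<bar> \<le> Vb"
    and cW: "\<And>i. i \<in> Basis \<Longrightarrow> continuous_on {0..T} (Wf i)"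
    and mw: "\<And>i. i \<in> Basis \<Longrightarrow> wf i \<in> borel_measurable borel"
    and Wb: "\<And>i s. i \<in> Basis \<Longrightarrow> s \<in> {0..T} \<Longrightarrow> \<bar>Wf i s\<bar> \<le> Kw"
    and wb: "\<And>i s. i \<in> Basis \<Longrightarrow> s \<in> {0..T} \<Longrightarrow> \<bar>wf i s\<bar> \<le> Kw"
begin

definition P where "P h s = (\<Sum>i\<in>Basis. (h \<bullet> i) * Wf i s)"
definition Q where "Q h s = (\<Sum>i\<in>Basis. (h \<bullet> i) * wf i s)"
definition F1 where "F1 h = integral {0..T} (\<lambda>s. cos (Th s + P h s))"
definition F2 where "F2 h = integral {0..T} (\<lambda>s. sin (Th s + P h s))"
definition F4 where "F4 h = integral {0..T} (\<lambda>s. (v s + Q h s)\<^sup>2 / 2)"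
definition F where "F h = (F1 h, F2 h, P h T, F4 h)"
definition cv where "cv i = (integral {0..T} (\<lambda>s. - sin (Th s) * Wf i s),
   integral {0..T} (\<lambda>s. cos (Th s) * Wf i s), Wf i T, integral {0..T} (\<lambda>s. v s * wf i s))"
definition L where "L h = (\<Sum>i\<in>Basis. (h \<bullet> i) *\<^sub>R cv i)"

definition Kp where "Kp = 4 * Kw"

lemma Kw0: "0 \<le> Kw"
proof -
  obtain i :: R4 where "i \<in> Basis" using nonempty_Basis by blast
  then show ?thesis using Wb[of i 0] T by force
qed

lemma Vb0: "0 \<le> Vb" using vb[of 0] T by force

lemma sum_bound:
  fixes g :: "R4 \<Rightarrow> real"
  assumes "\<And>i. i \<in> Basis \<Longrightarrow> \<bar>g i\<bar> \<le> Kw"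
  shows "\<bar>\<Sum>i\<in>Basis. (h \<bullet> i) * g i\<bar> \<le> Kp * norm h"
proof -
  have "\<bar>\<Sum>i\<in>Basis. (h \<bullet> i) * g i\<bar> \<le> (\<Sum>i\<in>Basis. \<bar>(h \<bullet> i) * g i\<bar>)" by (rule sum_abs)
  also have "\<dots> \<le> (\<Sum>i\<in>(Basis::R4 set). norm h * Kw)"
  proof (rule sum_mono)
    fix i :: R4 assume i: "i \<in> Basis"
    show "\<bar>(h \<bullet> i) * g i\<bar> \<le> norm h * Kw"
      unfolding abs_mult by (intro mult_mono Basis_le_norm i assms) auto
  qed
  also have "\<dots> = Kp * norm h" by (simp add: Kp_def)
  finally show ?thesis .
qed

lemma Pb: "s \<in> {0..T} \<Longrightarrow> \<bar>P h s\<bar> \<le> Kp * norm h"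
  unfolding P_def by (rule sum_bound) (rule Wb)
lemma Qb: "s \<in> {0..T} \<Longrightarrow> \<bar>Q h s\<bar> \<le> Kp * norm h"
  unfolding Q_def by (rule sum_bound) (rule wb)
lemma PT: "\<bar>P h T\<bar> \<le> Kp * norm h" using Pb[of T h] T by simp

lemma P_diff: "P h s - P h' s = P (h - h') s"
  by (simp add: P_def inner_diff_left algebra_simps sum_subtractf)
lemma Q_diff: "Q h s - Q h' s = Q (h - h') s"
  by (simp add: Q_def inner_diff_left algebra_simps sum_subtractf)
lemma P0: "P 0 s = 0" by (simp add: P_def)
lemma Q0: "Q 0 s = 0" by (simp add: Q_def)

lemma cP: "continuous_on {0..T} (P h)"
  unfolding P_def[abs_def] by (intro continuous_intros cW) auto

lemma mQ: "Q h \<in> borel_measurable borel"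
  unfolding Q_def[abs_def] using mw by measurable

lemma Kp0: "0 \<le> Kp" using Kw0 by (simp add: Kp_def)


definition bnd :: "(real \<Rightarrow> real) \<Rightarrow> bool" where "bnd f \<longleftrightarrow> (\<exists>B. \<forall>s\<in>{0..T}. \<bar>f s\<bar> \<le> B)"

lemma bnd_add: "bnd f \<Longrightarrow> bnd g \<Longrightarrow> bnd (\<lambda>s. f s + g s)"
  unfolding bnd_def by (metis abs_triangle_ineq add_mono order_trans)
lemma bnd_diff: "bnd f \<Longrightarrow> bnd g \<Longrightarrow> bnd (\<lambda>s. f s - g s)"
  unfolding bnd_def by (metis abs_triangle_ineq4 add_mono order_trans)
lemma bnd_mult: "bnd f \<Longrightarrow> bnd g \<Longrightarrow> bnd (\<lambda>s. f s * g s)"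
proof -
  assume "bnd f" "bnd g"
  then obtain A B where A: "\<forall>s\<in>{0..T}. \<bar>f s\<bar> \<le> A" and B: "\<forall>s\<in>{0..T}. \<bar>g s\<bar> \<le> B"
    unfolding bnd_def by blast
  have "\<bar>f s * g s\<bar> \<le> A * B" if "s \<in> {0..T}" for s
    unfolding abs_mult using A B that by (intro mult_mono) auto
  then show ?thesis unfolding bnd_def by blast
qed
lemma bnd_const: "bnd (\<lambda>s. c)" unfolding bnd_def by blast
lemma bnd_pow2: "bnd f \<Longrightarrow> bnd (\<lambda>s. (f s)\<^sup>2 / 2)"
proof -
  assume "bnd f"
  then obtain A where A: "\<forall>s\<in>{0..T}. \<bar>f s\<bar> \<le> A" unfolding bnd_def by blast
  have "\<bar>(f s)\<^sup>2 / 2\<bar> \<le> A\<^sup>2 / 2" if "s \<in> {0..T}" for s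
    using power_mono[of "\<bar>f s\<bar>" A 2] A that by simp
  then show ?thesis unfolding bnd_def by blast
qed
lemma bnd_v: "bnd v" unfolding bnd_def using vb by blast
lemma bnd_Q: "bnd (Q h)" unfolding bnd_def using Qb by blast
lemma bnd_wf: "i \<in> Basis \<Longrightarrow> bnd (wf i)" unfolding bnd_def using wb by blast

lemma mb_int: "f \<in> borel_measurable borel \<Longrightarrow> bnd f \<Longrightarrow> f integrable_on {0..T}"
  unfolding bnd_def using meas_int(2) by blast

lemma c_int: "continuous_on {0..T} (f :: real \<Rightarrow> real) \<Longrightarrow> f integrable_on {0..T}"
  by (rule integrable_continuous_real)

lemma L_comp: "L h = (integral {0..T} (\<lambda>s. - sin (Th s) * P h s), integral {0..T} (\<lambda>s. cos (Th s) * P h s),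
   P h T, integral {0..T} (\<lambda>s. v s * Q h s))"
proof -
  have e1: "integral {0..T} (\<lambda>s. - sin (Th s) * P h s) = (\<Sum>i\<in>Basis. (h \<bullet> i) * integral {0..T} (\<lambda>s. - sin (Th s) * Wf i s))"
  proof -
    have "integral {0..T} (\<lambda>s. - sin (Th s) * P h s) = integral {0..T} (\<lambda>s. \<Sum>i\<in>Basis. (h \<bullet> i) * (- sin (Th s) * Wf i s))"
      by (simp add: P_def sum_distrib_left algebra_simps)
    also have "\<dots> = (\<Sum>i\<in>Basis. (h \<bullet> i) * integral {0..T} (\<lambda>s. - sin (Th s) * Wf i s))"
      by (rule int_sum_lin) (auto intro!: c_int continuous_intros cTh cW)
    finally show ?thesis .
  qed
  have e2: "integral {0..T} (\<lambda>s. cos (Th s) * P h s) = (\<Sum>i\<in>Basis. (h \<bullet> i) * integral {0..T} (\<lambda>s. cos (Th s) * Wf i s))"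
  proof -
    have "integral {0..T} (\<lambda>s. cos (Th s) * P h s) = integral {0..T} (\<lambda>s. \<Sum>i\<in>Basis. (h \<bullet> i) * (cos (Th s) * Wf i s))"
      by (simp add: P_def sum_distrib_left algebra_simps)
    also have "\<dots> = (\<Sum>i\<in>Basis. (h \<bullet> i) * integral {0..T} (\<lambda>s. cos (Th s) * Wf i s))"
      by (rule int_sum_lin) (auto intro!: c_int continuous_intros cTh cW)
    finally show ?thesis .
  qed
  have e4: "integral {0..T} (\<lambda>s. v s * Q h s) = (\<Sum>i\<in>Basis. (h \<bullet> i) * integral {0..T} (\<lambda>s. v s * wf i s))"
  proof -
    have "integral {0..T} (\<lambda>s. v s * Q h s) = integral {0..T} (\<lambda>s. \<Sum>i\<in>Basis. (h \<bullet> i) * (v s * wf i s))"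
      by (simp add: Q_def sum_distrib_left algebra_simps)
    also have "\<dots> = (\<Sum>i\<in>Basis. (h \<bullet> i) * integral {0..T} (\<lambda>s. v s * wf i s))"
    proof (rule int_sum_lin)
      fix i :: R4 assume i: "i \<in> Basis"
      show "(\<lambda>s. v s * wf i s) integrable_on {0..T}"
        by (rule mb_int) (use mv mw[OF i] bnd_mult[OF bnd_v bnd_wf[OF i]] in measurable)
    qed simp
    finally show ?thesis .
  qed
  show ?thesis unfolding L_def e1 e2 e4
    by (simp add: prod_eq_iff fst_sum snd_sum cv_def P_def)
qed

lemma bl_L: "bounded_linear L"
  unfolding L_def
  by (intro bounded_linear_sum bounded_linear_compose[OF bounded_linear_scaleR_left bounded_linear_inner_left])

lemma sq_le: "\<bar>p\<bar> \<le> K \<Longrightarrow> p\<^sup>2 \<le> K\<^sup>2" for p K :: real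
  using power_mono[of "\<bar>p\<bar>" K 2] by simp

lemma F1_deriv: "(F1 has_derivative (\<lambda>h. fst (L h))) (at 0)"
proof (rule quad_deriv[where r=1 and C="T * Kp\<^sup>2"])
  show "bounded_linear (\<lambda>h. fst (L h))" by (rule bounded_linear_compose[OF bounded_linear_fst bl_L])
  show "(0::real) < 1" by simp
  fix h :: R4
  have i1: "(\<lambda>s. cos (Th s + P h s)) integrable_on {0..T}" by (intro c_int continuous_intros cTh cP)
  have i2: "(\<lambda>s. cos (Th s)) integrable_on {0..T}" by (intro c_int continuous_intros cTh)
  have i3: "(\<lambda>s. (- sin (Th s)) * P h s) integrable_on {0..T}" by (intro c_int continuous_intros cTh cP)
  have "F1 h - F1 0 - fst (L h) = integral {0..T} (\<lambda>s. cos (Th s + P h s) - cos (Th s) - (- sin (Th s)) * P h s)"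
    unfolding F1_def L_comp P0 fst_conv
    by (subst integral_diff[OF integrable_diff[OF i1 i2] i3]) (subst integral_diff[OF i1 i2], simp)
  also have "\<bar>\<dots>\<bar> \<le> T * (Kp * norm h)\<^sup>2"
  proof (rule intbound)
    show "(\<lambda>s. cos (Th s + P h s) - cos (Th s) - (- sin (Th s)) * P h s) integrable_on {0..T}"
      by (intro c_int continuous_intros cTh cP)
    fix s assume s: "s \<in> {0..T}"
    have "\<bar>cos (Th s + P h s) - cos (Th s) - (- sin (Th s)) * P h s\<bar> \<le> 1 * (P h s)\<^sup>2" by (rule cos_taylor)
    also have "\<dots> \<le> (Kp * norm h)\<^sup>2" using sq_le[OF Pb[OF s]] by simp
    finally show "\<bar>cos (Th s + P h s) - cos (Th s) - (- sin (Th s)) * P h s\<bar> \<le> (Kp * norm h)\<^sup>2" .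
  qed (use T in simp)
  finally show "\<bar>F1 h - F1 0 - fst (L h)\<bar> \<le> T * Kp\<^sup>2 * (norm h)\<^sup>2"
    by (simp add: power_mult_distrib mult.assoc)
qed

lemma F2_deriv: "(F2 has_derivative (\<lambda>h. fst (snd (L h)))) (at 0)"
proof (rule quad_deriv[where r=1 and C="T * Kp\<^sup>2"])
  show "bounded_linear (\<lambda>h. fst (snd (L h)))"
    by (rule bounded_linear_compose[OF bounded_linear_fst bounded_linear_compose[OF bounded_linear_snd bl_L]])
  show "(0::real) < 1" by simp
  fix h :: R4
  have i1: "(\<lambda>s. sin (Th s + P h s)) integrable_on {0..T}" by (intro c_int continuous_intros cTh cP)
  have i2: "(\<lambda>s. sin (Th s)) integrable_on {0..T}" by (intro c_int continuous_intros cTh)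
  have i3: "(\<lambda>s. cos (Th s) * P h s) integrable_on {0..T}" by (intro c_int continuous_intros cTh cP)
  have "F2 h - F2 0 - fst (snd (L h)) = integral {0..T} (\<lambda>s. sin (Th s + P h s) - sin (Th s) - cos (Th s) * P h s)"
    unfolding F2_def L_comp P0 fst_conv snd_conv
    by (subst integral_diff[OF integrable_diff[OF i1 i2] i3]) (subst integral_diff[OF i1 i2], simp)
  also have "\<bar>\<dots>\<bar> \<le> T * (Kp * norm h)\<^sup>2"
  proof (rule intbound)
    show "(\<lambda>s. sin (Th s + P h s) - sin (Th s) - cos (Th s) * P h s) integrable_on {0..T}"
      by (intro c_int continuous_intros cTh cP)
    fix s assume s: "s \<in> {0..T}"
    have "\<bar>sin (Th s + P h s) - sin (Th s) - cos (Th s) * P h s\<bar> \<le> 1 * (P h s)\<^sup>2" by (rule sin_taylor)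
    also have "\<dots> \<le> (Kp * norm h)\<^sup>2" using sq_le[OF Pb[OF s]] by simp
    finally show "\<bar>sin (Th s + P h s) - sin (Th s) - cos (Th s) * P h s\<bar> \<le> (Kp * norm h)\<^sup>2" .
  qed (use T in simp)
  finally show "\<bar>F2 h - F2 0 - fst (snd (L h))\<bar> \<le> T * Kp\<^sup>2 * (norm h)\<^sup>2"
    by (simp add: power_mult_distrib mult.assoc)
qed

lemma F3_deriv: "((\<lambda>h. P h T) has_derivative (\<lambda>h. fst (snd (snd (L h))))) (at 0)"
proof -
  have "(\<lambda>h. fst (snd (snd (L h)))) = (\<lambda>h. P h T)" by (rule ext) (simp add: L_comp)
  moreover have "bounded_linear (\<lambda>h. fst (snd (snd (L h))))"
    by (intro bounded_linear_compose[OF bounded_linear_fst] bounded_linear_compose[OF bounded_linear_snd] bl_L)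
  ultimately show ?thesis using bounded_linear_imp_has_derivative by metis
qed

lemma F4_deriv: "(F4 has_derivative (\<lambda>h. snd (snd (snd (L h))))) (at 0)"
proof (rule quad_deriv[where r=1 and C="T * Kp\<^sup>2"])
  show "bounded_linear (\<lambda>h. snd (snd (snd (L h))))"
    by (intro bounded_linear_compose[OF bounded_linear_snd] bl_L)
  show "(0::real) < 1" by simp
  fix h :: R4
  have mQh: "Q h \<in> borel_measurable borel" by (rule mQ)
  have i1: "(\<lambda>s. (v s + Q h s)\<^sup>2 / 2) integrable_on {0..T}"
    by (rule mb_int) (use mv mQh bnd_pow2[OF bnd_add[OF bnd_v bnd_Q]] in measurable)
  have i2: "(\<lambda>s. (v s)\<^sup>2 / 2) integrable_on {0..T}"
    by (rule mb_int) (use mv bnd_pow2[OF bnd_v] in measurable)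
  have i3: "(\<lambda>s. v s * Q h s) integrable_on {0..T}"
    by (rule mb_int) (use mv mQh bnd_mult[OF bnd_v bnd_Q] in measurable)
  have "F4 h - F4 0 - snd (snd (snd (L h))) = integral {0..T} (\<lambda>s. (v s + Q h s)\<^sup>2 / 2 - (v s)\<^sup>2 / 2 - v s * Q h s)"
    unfolding F4_def L_comp Q0 fst_conv snd_conv
    by (subst integral_diff[OF integrable_diff[OF i1 i2] i3]) (subst integral_diff[OF i1 i2], simp)
  also have "\<dots> = integral {0..T} (\<lambda>s. (Q h s)\<^sup>2 / 2)"
    by (rule integral_cong) (simp add: power2_eq_square algebra_simps)
  also have "\<bar>\<dots>\<bar> \<le> T * (Kp * norm h)\<^sup>2"
  proof (rule intbound)
    show "(\<lambda>s. (Q h s)\<^sup>2 / 2) integrable_on {0..T}"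
      by (rule mb_int) (use mQh bnd_pow2[OF bnd_Q] in measurable)
    fix s assume s: "s \<in> {0..T}"
    have q1: "(Q h s)\<^sup>2 \<le> (Kp * norm h)\<^sup>2" using sq_le[OF Qb[OF s]] .
    have q2: "\<bar>(Q h s)\<^sup>2 / 2\<bar> = (Q h s)\<^sup>2 / 2" by simp
    have q3: "0 \<le> (Q h s)\<^sup>2" by simp
    show "\<bar>(Q h s)\<^sup>2 / 2\<bar> \<le> (Kp * norm h)\<^sup>2" unfolding q2 using q1 q3 by linarith
  qed (use T in simp)
  finally show "\<bar>F4 h - F4 0 - snd (snd (snd (L h)))\<bar> \<le> T * Kp\<^sup>2 * (norm h)\<^sup>2"
    by (simp add: power_mult_distrib mult.assoc)
qed

lemma F_deriv: "(F has_derivative L) (at 0)"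
proof -
  have "(F has_derivative (\<lambda>h. (fst (L h), fst (snd (L h)), fst (snd (snd (L h))), snd (snd (snd (L h)))))) (at 0)"
    unfolding F_def[abs_def]
    by (intro has_derivative_Pair F1_deriv F2_deriv F3_deriv F4_deriv)
  then show ?thesis by simp
qed


lemma lipcont:
  fixes f :: "R4 \<Rightarrow> real"
  assumes "0 \<le> C" "\<And>h h'. h \<in> S \<Longrightarrow> h' \<in> S \<Longrightarrow> \<bar>f h - f h'\<bar> \<le> C * norm (h - h')"
  shows "continuous_on S f"
  by (rule lipschitz_on_continuous_on[OF lipschitz_onI[of S f C]]) (use assms in \<open>auto simp: dist_norm\<close>)

lemma F1_cont: "continuous_on S F1"
proof (rule lipcont[where C="T * Kp"])
  show "0 \<le> T * Kp" using T Kp0 by simp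
  fix h h' :: R4
  have "F1 h - F1 h' = integral {0..T} (\<lambda>s. cos (Th s + P h s) - cos (Th s + P h' s))"
    unfolding F1_def by (rule integral_diff[symmetric]) (intro c_int continuous_intros cTh cP)+
  also have "\<bar>\<dots>\<bar> \<le> T * (Kp * norm (h - h'))"
  proof (rule intbound)
    show "(\<lambda>s. cos (Th s + P h s) - cos (Th s + P h' s)) integrable_on {0..T}"
      by (intro c_int continuous_intros cTh cP)
    fix s assume s: "s \<in> {0..T}"
    have "\<bar>cos (Th s + P h s) - cos (Th s + P h' s)\<bar> \<le> 1 * \<bar>(Th s + P h s) - (Th s + P h' s)\<bar>" by (rule cos_lip)
    also have "\<dots> = \<bar>P (h - h') s\<bar>" using P_diff[of h s h'] by simp
    also have "\<dots> \<le> Kp * norm (h - h')" by (rule Pb[OF s])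
    finally show "\<bar>cos (Th s + P h s) - cos (Th s + P h' s)\<bar> \<le> Kp * norm (h - h')" .
  qed (use T in simp)
  finally show "\<bar>F1 h - F1 h'\<bar> \<le> T * Kp * norm (h - h')" by (simp add: mult.assoc)
qed

lemma F2_cont: "continuous_on S F2"
proof (rule lipcont[where C="T * Kp"])
  show "0 \<le> T * Kp" using T Kp0 by simp
  fix h h' :: R4
  have "F2 h - F2 h' = integral {0..T} (\<lambda>s. sin (Th s + P h s) - sin (Th s + P h' s))"
    unfolding F2_def by (rule integral_diff[symmetric]) (intro c_int continuous_intros cTh cP)+
  also have "\<bar>\<dots>\<bar> \<le> T * (Kp * norm (h - h'))"
  proof (rule intbound)
    show "(\<lambda>s. sin (Th s + P h s) - sin (Th s + P h' s)) integrable_on {0..T}"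
      by (intro c_int continuous_intros cTh cP)
    fix s assume s: "s \<in> {0..T}"
    have "\<bar>sin (Th s + P h s) - sin (Th s + P h' s)\<bar> \<le> 1 * \<bar>(Th s + P h s) - (Th s + P h' s)\<bar>" by (rule sin_lip)
    also have "\<dots> = \<bar>P (h - h') s\<bar>" using P_diff[of h s h'] by simp
    also have "\<dots> \<le> Kp * norm (h - h')" by (rule Pb[OF s])
    finally show "\<bar>sin (Th s + P h s) - sin (Th s + P h' s)\<bar> \<le> Kp * norm (h - h')" .
  qed (use T in simp)
  finally show "\<bar>F2 h - F2 h'\<bar> \<le> T * Kp * norm (h - h')" by (simp add: mult.assoc)
qed

lemma F3_cont: "continuous_on S (\<lambda>h. P h T)"
proof (rule lipcont[where C="Kp"])
  show "0 \<le> Kp" using Kp0 by simp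
  fix h h' :: R4
  show "\<bar>P h T - P h' T\<bar> \<le> Kp * norm (h - h')" unfolding P_diff by (rule PT)
qed

lemma F4_cont: "continuous_on (ball 0 1) F4"
proof (rule lipcont[where C="T * (Kp * (Vb + Kp))"])
  show "0 \<le> T * (Kp * (Vb + Kp))" using T Kp0 Vb0 by simp
  fix h h' :: R4 assume h: "h \<in> ball 0 1" and h': "h' \<in> ball 0 1"
  have i1: "(\<lambda>s. (v s + Q h s)\<^sup>2 / 2) integrable_on {0..T}" for h
    by (rule mb_int) (use mv mQ[of h] bnd_pow2[OF bnd_add[OF bnd_v bnd_Q]] in measurable)
  have "F4 h - F4 h' = integral {0..T} (\<lambda>s. (v s + Q h s)\<^sup>2 / 2 - (v s + Q h' s)\<^sup>2 / 2)"
    unfolding F4_def by (rule integral_diff[symmetric, OF i1 i1])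
  also have "\<bar>\<dots>\<bar> \<le> T * (Kp * (Vb + Kp) * norm (h - h'))"
  proof (rule intbound)
    show "(\<lambda>s. (v s + Q h s)\<^sup>2 / 2 - (v s + Q h' s)\<^sup>2 / 2) integrable_on {0..T}"
      by (rule integrable_diff[OF i1 i1])
    fix s assume s: "s \<in> {0..T}"
    have e: "(v s + Q h s)\<^sup>2 / 2 - (v s + Q h' s)\<^sup>2 / 2 = Q (h - h') s * ((2 * v s + Q h s + Q h' s) / 2)"
      using Q_diff[of h s h'] by (simp add: power2_eq_square algebra_simps)
    have b1: "\<bar>Q (h - h') s\<bar> \<le> Kp * norm (h - h')" by (rule Qb[OF s])
    have nh: "norm h \<le> 1" "norm h' \<le> 1" using h h' by auto
    have "\<bar>Q h s\<bar> \<le> Kp" using Qb[OF s, of h] mult_left_mono[OF nh(1) Kp0] by simp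
    moreover have "\<bar>Q h' s\<bar> \<le> Kp" using Qb[OF s, of h'] mult_left_mono[OF nh(2) Kp0] by simp
    ultimately have b2: "\<bar>(2 * v s + Q h s + Q h' s) / 2\<bar> \<le> Vb + Kp" using vb[OF s] by simp
    have "\<bar>Q (h - h') s * ((2 * v s + Q h s + Q h' s) / 2)\<bar> \<le> (Kp * norm (h - h')) * (Vb + Kp)"
      unfolding abs_mult by (intro mult_mono b1 b2) (auto intro: mult_nonneg_nonneg Kp0)
    then show "\<bar>(v s + Q h s)\<^sup>2 / 2 - (v s + Q h' s)\<^sup>2 / 2\<bar> \<le> Kp * (Vb + Kp) * norm (h - h')"
      unfolding e by (simp add: algebra_simps)
  qed (use T in simp)
  finally show "\<bar>F4 h - F4 h'\<bar> \<le> T * (Kp * (Vb + Kp)) * norm (h - h')" by (simp add: mult.assoc)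
qed

lemma F_cont: "continuous_on (ball 0 1) F"
  unfolding F_def[abs_def]
  by (intro continuous_on_Pair F1_cont F2_cont F3_cont F4_cont)

lemma pert_open:
  assumes "surj L"
  obtains e where "e > 0" "\<And>y. dist y (F 0) < e \<Longrightarrow> \<exists>h. norm h < 1 \<and> F h = y"
proof -
  have lin: "linear L" using bl_L bounded_linear.linear by blast
  obtain g where g: "linear g" "L \<circ> g = id"
    using linear_surjective_right_inverse[OF lin assms] by blast
  have bg: "bounded_linear g" using g(1) linear_conv_bounded_linear by blast
  have "F 0 \<in> interior (F ` ball 0 1)"
    by (rule sussmann_open_mapping[OF open_ball F_cont _ F_deriv bg g(2)]) auto
  then obtain e where e: "e > 0" "ball (F 0) e \<subseteq> F ` ball 0 1"
    using mem_interior by blast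
  show ?thesis
  proof (rule that[OF e(1)])
    fix y assume "dist y (F 0) < e"
    then have "y \<in> F ` ball 0 1" using e(2) by (auto simp: dist_commute)
    then obtain h where "h \<in> ball 0 1" "y = F h" by blast
    then show "\<exists>h. norm h < 1 \<and> F h = y" by (intro exI[of _ h]) auto
  qed
qed

end

locale fw =
  fixes T px py c0 a b :: real and th x y :: "real \<Rightarrow> real"
  assumes ab: "0 < a" "a < b" "b < T"
    and cth: "continuous_on {0..T} th" and cx: "continuous_on {0..T} x" and cy: "continuous_on {0..T} y"
    and dth: "\<And>s. 0 < s \<Longrightarrow> s < T \<Longrightarrow> (th has_real_derivative (px * y s - py * x s + c0)) (at s)"
    and dx: "\<And>s. 0 < s \<Longrightarrow> s < T \<Longrightarrow> (x has_real_derivative cos (th s)) (at s)"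
    and dy: "\<And>s. 0 < s \<Longrightarrow> s < T \<Longrightarrow> (y has_real_derivative sin (th s)) (at s)"
    and thT: "th T = - pi / 2" and xT: "x T = 0" and yT: "y T = 0"
    and sab: "sin (th a - th b) = 0"
    and chord: "(y b - y a) * cos (th a) = (x b - x a) * sin (th a)"
    and xab: "x a \<noteq> x b"
begin

definition u where "u s = px * y s - py * x s + c0"
definition d where "d s = px * sin (th s) - py * cos (th s)"

lemma T0: "0 < T" using ab by simp

lemma dth': "0 < s \<Longrightarrow> s < T \<Longrightarrow> (th has_real_derivative u s) (at s)"
  using dth unfolding u_def by simp

lemma du: "0 < s \<Longrightarrow> s < T \<Longrightarrow> (u has_real_derivative d s) (at s)"
  unfolding u_def[abs_def] d_def
  by (auto intro!: derivative_eq_intros dx dy)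

lemma dd: "0 < s \<Longrightarrow> s < T \<Longrightarrow> (d has_real_derivative (px * cos (th s) + py * sin (th s)) * u s) (at s)"
  unfolding d_def[abs_def]
  by (auto intro!: derivative_eq_intros dth' simp: algebra_simps)

lemma cu: "continuous_on {0..T} u"
  unfolding u_def[abs_def] by (intro continuous_intros cx cy)

lemma cd: "continuous_on {0..T} d"
  unfolding d_def[abs_def] by (intro continuous_intros cth)

lemma key:
  assumes c: "0 < c" "c < T" and uc: "u c = 0" and dc: "d c = 0"
  shows False
proof -
  define K where "K = 1 + \<bar>px\<bar> + \<bar>py\<bar>"
  define E where "E z = (u z)\<^sup>2 + (d z)\<^sup>2" for z
  define k where "k z = px * cos (th z) + py * sin (th z)" for z
  have kb: "\<bar>1 + k z\<bar> \<le> K" for z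
  proof -
    have "\<bar>px * cos (th z)\<bar> \<le> \<bar>px\<bar>" by (simp add: abs_mult mult_left_le)
    moreover have "\<bar>py * sin (th z)\<bar> \<le> \<bar>py\<bar>" by (simp add: abs_mult mult_left_le)
    ultimately show ?thesis unfolding k_def K_def by linarith
  qed
  have dE: "(E has_real_derivative 2 * u z * d z * (1 + k z)) (at z)" if "0 < z" "z < T" for z
    unfolding E_def[abs_def] using that
    by (auto intro!: derivative_eq_intros du dd simp: k_def algebra_simps)
  have Eb: "2 * u z * d z * (1 + k z) \<le> K * E z" "- (K * E z) \<le> 2 * u z * d z * (1 + k z)" for z
  proof -
    have s1: "2 * u z * d z \<le> E z" unfolding E_def using sum_squares_bound[of "u z" "d z"] by simp
    have s2: "- E z \<le> 2 * u z * d z" unfolding E_def using zero_le_power2[of "u z + d z"]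
      by (simp add: power2_sum)
    have "\<bar>2 * u z * d z\<bar> \<le> E z" using s1 s2 by (simp add: abs_le_iff)
    then have "\<bar>2 * u z * d z\<bar> * \<bar>1 + k z\<bar> \<le> E z * K"
      using kb[of z] by (intro mult_mono) (auto simp: E_def)
    then have "\<bar>2 * u z * d z * (1 + k z)\<bar> \<le> E z * K" by (simp add: abs_mult)
    then show "2 * u z * d z * (1 + k z) \<le> K * E z" "- (K * E z) \<le> 2 * u z * d z * (1 + k z)"
      by (auto simp: mult.commute abs_le_iff)
  qed
  have E0: "E z \<ge> 0" for z unfolding E_def by simp
  have Ec: "E c = 0" unfolding E_def using uc dc by simp
  have Ez: "E z = 0" if z: "0 < z" "z < T" for z
  proof (cases "c \<le> z")
    case True
    define f where "f w = E w * exp (- K * w)" for w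
    have "f z \<le> f c"
    proof (rule DERIV_nonpos_imp_nonincreasing[OF True])
      fix w assume w: "c \<le> w" "w \<le> z"
      then have w0: "0 < w" "w < T" using c z by auto
      have "(f has_real_derivative (2 * u w * d w * (1 + k w)) * exp (- K * w) + E w * (exp (- K * w) * (- K))) (at w)"
        unfolding f_def[abs_def] by (auto intro!: derivative_eq_intros dE[OF w0])
      moreover have "(2 * u w * d w * (1 + k w)) * exp (- K * w) + E w * (exp (- K * w) * (- K)) \<le> 0"
      proof -
        have "(2 * u w * d w * (1 + k w)) * exp (- K * w) \<le> (K * E w) * exp (- K * w)"
          using Eb(1)[of w] by (intro mult_right_mono) auto
        then show ?thesis by (simp add: algebra_simps)
      qed
      ultimately show "\<exists>y. DERIV f w :> y \<and> y \<le> 0" by blast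
    qed
    then have "E z * exp (- K * z) \<le> 0" using Ec by (simp add: f_def)
    then have "E z \<le> 0" by (simp add: mult_le_0_iff)
    then show ?thesis using E0[of z] by simp
  next
    case False
    then have zc: "z \<le> c" by simp
    define f where "f w = E w * exp (K * w)" for w
    have "f z \<le> f c"
    proof (rule DERIV_nonneg_imp_nondecreasing[OF zc])
      fix w assume w: "z \<le> w" "w \<le> c"
      then have w0: "0 < w" "w < T" using c z by auto
      have "(f has_real_derivative (2 * u w * d w * (1 + k w)) * exp (K * w) + E w * (exp (K * w) * K)) (at w)"
        unfolding f_def[abs_def] by (auto intro!: derivative_eq_intros dE[OF w0])
      moreover have "(2 * u w * d w * (1 + k w)) * exp (K * w) + E w * (exp (K * w) * K) \<ge> 0"
      proof -
        have "(- (K * E w)) * exp (K * w) \<le> (2 * u w * d w * (1 + k w)) * exp (K * w)"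
          using Eb(2)[of w] by (intro mult_right_mono) auto
        then show ?thesis by (simp add: algebra_simps)
      qed
      ultimately show "\<exists>y. DERIV f w :> y \<and> y \<ge> 0" by blast
    qed
    then have "E z * exp (K * z) \<le> 0" using Ec by (simp add: f_def)
    then have "E z \<le> 0" by (simp add: mult_le_0_iff)
    then show ?thesis using E0[of z] by simp
  qed
  have u0: "u z = 0" if "0 < z" "z < T" for z
    using Ez[OF that] unfolding E_def by (simp add: add_nonneg_eq_0_iff)
  have thc: "th z = th T" if "z \<in> {0..T}" for z
  proof (cases "z = T")
    case True then show ?thesis by simp
  next
    case False
    then have "z < T" using that by simp
    have "th T = th z"
      by (rule DERIV_isconst_end[OF \<open>z < T\<close> continuous_on_subset[OF cth]])
         (use that dth' u0 in \<open>auto\<close>)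
    then show ?thesis by simp
  qed
  have "x b = x a"
    by (rule DERIV_isconst_end[OF ab(2) continuous_on_subset[OF cx]])
       (use ab dx thc thT in \<open>force+\<close>)
  then show False using xab by simp
qed


definition cl where "cl s = max a (min s b)"
definition al where "al = th a"
definition thv where "thv s = th s - 2 * (th (cl s) - th a)"
definition xv where "xv s = x s + (cos (2 * al) - 1) * (x (cl s) - x a) + sin (2 * al) * (y (cl s) - y a)"
definition yv where "yv s = y s + sin (2 * al) * (x (cl s) - x a) - (cos (2 * al) + 1) * (y (cl s) - y a)"
definition ue where "ue s = u (max 0 (min s T))"
definition sg :: "real \<Rightarrow> real" where "sg s = (if a < s \<and> s \<le> b then -1 else 1)"
definition v where "v s = sg s * ue s"

lemma cl_in: "cl s \<in> {a..b}" using ab by (auto simp: cl_def)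

lemma cl_cont: "continuous_on {0..T} G \<Longrightarrow> continuous_on {0..T} (\<lambda>s. G (cl s))"
proof -
  assume G: "continuous_on {0..T} G"
  have "continuous_on {0..T} cl" unfolding cl_def by (intro continuous_intros)
  moreover have "cl ` {0..T} \<subseteq> {0..T}" unfolding image_subset_iff cl_def using ab by auto
  ultimately show ?thesis using continuous_on_compose2[OF G] by blast
qed

lemma cl_deriv:
  assumes s: "0 < s" "s < T" "s \<noteq> a" "s \<noteq> b"
    and G: "(G has_real_derivative D) (at s)"
  shows "((\<lambda>z. G (cl z)) has_real_derivative (if a < s \<and> s < b then D else 0)) (at s)"
proof -
  consider "s < a" | "a < s \<and> s < b" | "b < s" using s by linarith
  then show ?thesis
  proof cases
    case 1
    have "((\<lambda>z. G a) has_real_derivative 0) (at s)" by simp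
    then have "((\<lambda>z. G (cl z)) has_real_derivative 0) (at s)"
      by (rule has_field_derivative_transform_within_open[of _ _ _ "{..<a}"])
         (use 1 ab in \<open>auto simp: cl_def\<close>)
    then show ?thesis using 1 by simp
  next
    case 2
    have "((\<lambda>z. G (cl z)) has_real_derivative D) (at s)"
      by (rule has_field_derivative_transform_within_open[OF G, of "{a<..<b}"])
         (use 2 in \<open>auto simp: cl_def\<close>)
    then show ?thesis using 2 by simp
  next
    case 3
    have "((\<lambda>z. G b) has_real_derivative 0) (at s)" by simp
    then have "((\<lambda>z. G (cl z)) has_real_derivative 0) (at s)"
      by (rule has_field_derivative_transform_within_open[of _ _ _ "{b<..}"])
         (use 3 ab in \<open>auto simp: cl_def\<close>)
    then show ?thesis using 3 ab by simp
  qed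
qed

lemma kpi: obtains k :: int where "th b = th a + of_int k * pi"
proof -
  obtain i :: int where "th a - th b = of_int i * pi" using sab sin_zero_iff_int2 by blast
  then have "th b = th a + of_int (- i) * pi" by simp
  then show ?thesis using that by blast
qed

lemma cos_shift: "cos (t - 2 * (th b - th a)) = cos t" "sin (t - 2 * (th b - th a)) = sin t"
proof -
  obtain k :: int where k: "th b = th a + of_int k * pi" using kpi by blast
  have e: "t - 2 * (th b - th a) = t + (2 * pi) * of_int (- k)" using k by (simp add: algebra_simps)
  show "cos (t - 2 * (th b - th a)) = cos t" "sin (t - 2 * (th b - th a)) = sin t"
    unfolding e cos_add sin_add by simp_all
qed

lemma ue_eq: "s \<in> {0..T} \<Longrightarrow> ue s = u s" by (simp add: ue_def)

lemma ue_cont: "continuous_on UNIV ue"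
proof -
  have "continuous_on UNIV (\<lambda>s. max 0 (min s T))" by (intro continuous_intros)
  moreover have "range (\<lambda>s. max 0 (min s T)) \<subseteq> {0..T}" using T0 by auto
  ultimately show ?thesis unfolding ue_def[abs_def] using continuous_on_compose2[OF cu] by blast
qed

lemma v_eq: "0 < s \<Longrightarrow> s < T \<Longrightarrow> s \<noteq> b \<Longrightarrow> v s = (if a < s \<and> s < b then - u s else u s)"
  by (auto simp: v_def sg_def ue_def)

lemma thv_deriv: "0 < s \<Longrightarrow> s < T \<Longrightarrow> s \<noteq> a \<Longrightarrow> s \<noteq> b \<Longrightarrow> (thv has_real_derivative v s) (at s)"
proof -
  assume s: "0 < s" "s < T" "s \<noteq> a" "s \<noteq> b"
  note H = cl_deriv[OF s dth'[OF s(1,2)]]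
  have eq: "u s - 2 * ((if a < s \<and> s < b then u s else 0) - 0) = v s" using v_eq[OF s(1,2,4)] by auto
  have "((\<lambda>z. th z - 2 * (th (cl z) - th a)) has_real_derivative
      u s - 2 * ((if a < s \<and> s < b then u s else 0) - 0)) (at s)"
    by (intro DERIV_diff DERIV_cmult dth'[OF s(1,2)] H DERIV_const)
  then show ?thesis unfolding thv_def[abs_def] eq .
qed

lemma thv_cont: "continuous_on {0..T} thv"
  unfolding thv_def[abs_def] by (intro continuous_intros cth cl_cont)

lemma thv_reg: "s \<in> {0..T} \<Longrightarrow> a < s \<Longrightarrow> s < b \<Longrightarrow> thv s = 2 * al - th s"
  by (simp add: thv_def cl_def al_def)

lemma thv_cos: "0 < s \<Longrightarrow> s < T \<Longrightarrow> s \<noteq> a \<Longrightarrow> s \<noteq> b \<Longrightarrow>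
   cos (thv s) = (if a < s \<and> s < b then cos (2*al) * cos (th s) + sin (2*al) * sin (th s) else cos (th s))"
   "0 < s \<Longrightarrow> s < T \<Longrightarrow> s \<noteq> a \<Longrightarrow> s \<noteq> b \<Longrightarrow>
   sin (thv s) = (if a < s \<and> s < b then sin (2*al) * cos (th s) - cos (2*al) * sin (th s) else sin (th s))"
proof -
  assume s: "0 < s" "s < T" "s \<noteq> a" "s \<noteq> b"
  consider "s < a" | "a < s \<and> s < b" | "b < s" using s by linarith
  then have "cos (thv s) = (if a < s \<and> s < b then cos (2*al) * cos (th s) + sin (2*al) * sin (th s) else cos (th s))
     \<and> sin (thv s) = (if a < s \<and> s < b then sin (2*al) * cos (th s) - cos (2*al) * sin (th s) else sin (th s))"
  proof cases
    case 1 then show ?thesis by (simp add: thv_def cl_def)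
  next
    case 2 then show ?thesis using s by (simp add: thv_reg cos_diff sin_diff)
  next
    case 3
    then have "cl s = b" using ab by (simp add: cl_def)
    then have e: "thv s = th s - 2 * (th b - th a)" by (simp add: thv_def)
    show ?thesis unfolding e cos_shift using 3 by simp
  qed
  then show "cos (thv s) = (if a < s \<and> s < b then cos (2*al) * cos (th s) + sin (2*al) * sin (th s) else cos (th s))"
     "sin (thv s) = (if a < s \<and> s < b then sin (2*al) * cos (th s) - cos (2*al) * sin (th s) else sin (th s))" by auto
qed

lemma xv_deriv: "0 < s \<Longrightarrow> s < T \<Longrightarrow> s \<noteq> a \<Longrightarrow> s \<noteq> b \<Longrightarrow> (xv has_real_derivative cos (thv s)) (at s)"
proof -
  assume s: "0 < s" "s < T" "s \<noteq> a" "s \<noteq> b"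
  note Hx = cl_deriv[OF s dx[OF s(1,2)]] and Hy = cl_deriv[OF s dy[OF s(1,2)]]
  have "((\<lambda>z. x z + (cos (2 * al) - 1) * (x (cl z) - x a) + sin (2 * al) * (y (cl z) - y a)) has_real_derivative
      cos (th s) + (cos (2 * al) - 1) * ((if a < s \<and> s < b then cos (th s) else 0) - 0)
       + sin (2 * al) * ((if a < s \<and> s < b then sin (th s) else 0) - 0)) (at s)"
    by (intro DERIV_add DERIV_diff DERIV_cmult dx[OF s(1,2)] Hx Hy DERIV_const)
  then show ?thesis unfolding xv_def[abs_def] thv_cos[OF s] by (auto simp: algebra_simps)
qed

lemma yv_deriv: "0 < s \<Longrightarrow> s < T \<Longrightarrow> s \<noteq> a \<Longrightarrow> s \<noteq> b \<Longrightarrow> (yv has_real_derivative sin (thv s)) (at s)"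
proof -
  assume s: "0 < s" "s < T" "s \<noteq> a" "s \<noteq> b"
  note Hx = cl_deriv[OF s dx[OF s(1,2)]] and Hy = cl_deriv[OF s dy[OF s(1,2)]]
  have "((\<lambda>z. y z + sin (2 * al) * (x (cl z) - x a) - (cos (2 * al) + 1) * (y (cl z) - y a)) has_real_derivative
      sin (th s) + sin (2 * al) * ((if a < s \<and> s < b then cos (th s) else 0) - 0)
       - (cos (2 * al) + 1) * ((if a < s \<and> s < b then sin (th s) else 0) - 0)) (at s)"
    by (intro DERIV_add DERIV_diff DERIV_cmult dy[OF s(1,2)] Hx Hy DERIV_const)
  then show ?thesis unfolding yv_def[abs_def] thv_cos[OF s] by (auto simp: algebra_simps)
qed

lemma xv_cont: "continuous_on {0..T} xv"
  unfolding xv_def[abs_def] by (intro continuous_intros cx cy cl_cont)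
lemma yv_cont: "continuous_on {0..T} yv"
  unfolding yv_def[abs_def] by (intro continuous_intros cx cy cl_cont)

lemma cl0: "cl 0 = a" using ab by (simp add: cl_def)
lemma clT: "cl T = b" using ab by (simp add: cl_def)

lemma chord_fix: "(cos (2 * al) - 1) * (x b - x a) + sin (2 * al) * (y b - y a) = 0"
   "sin (2 * al) * (x b - x a) - (cos (2 * al) + 1) * (y b - y a) = 0"
proof -
  have c2: "cos (2 * al) = 1 - 2 * (sin al)^2" "cos (2 * al) = 2 * (cos al)^2 - 1" "sin (2*al) = 2 * sin al * cos al"
    by (simp only: cos_double_sin, simp only: cos_double_cos, simp only: sin_double)
  have cs: "(cos al)^2 = 1 - (sin al)^2" by (simp add: cos_squared_eq)
  have ch: "(y b - y a) * cos al = (x b - x a) * sin al" using chord by (simp add: al_def)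
  show "(cos (2 * al) - 1) * (x b - x a) + sin (2 * al) * (y b - y a) = 0"
  proof -
    have "(cos (2 * al) - 1) * (x b - x a) + sin (2 * al) * (y b - y a)
       = 2 * sin al * ((y b - y a) * cos al - (x b - x a) * sin al)"
      unfolding c2(1) c2(3) using cs by (simp add: algebra_simps power2_eq_square)
    then show ?thesis using ch by simp
  qed
  show "sin (2 * al) * (x b - x a) - (cos (2 * al) + 1) * (y b - y a) = 0"
  proof -
    have "sin (2 * al) * (x b - x a) - (cos (2 * al) + 1) * (y b - y a)
       = 2 * cos al * ((x b - x a) * sin al - (y b - y a) * cos al)"
      unfolding c2(2) c2(3) using cs by (simp add: algebra_simps power2_eq_square)
    then show ?thesis using ch by simp
  qed
qed

lemma xv0: "xv 0 = x 0" and yv0: "yv 0 = y 0" and thv0: "thv 0 = th 0"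
  by (simp_all add: xv_def yv_def thv_def cl0)

lemma xvT: "xv T = x T" and yvT: "yv T = y T"
  using chord_fix by (simp_all add: xv_def yv_def clT)

lemma thvT: "\<exists>k::int. thv T = - pi / 2 + 2 * pi * of_int k"
proof -
  obtain k :: int where k: "th b = th a + of_int k * pi" using kpi by blast
  have "thv T = - pi / 2 + 2 * pi * of_int (- k)" using k thT by (simp add: thv_def clT algebra_simps)
  then show ?thesis by blast
qed

lemma v_has_int: "s \<in> {0..T} \<Longrightarrow> (v has_integral (thv s - thv 0)) {0..s}"
  by (rule fundamental_theorem_of_calculus_interior_strong[of "{a,b}"])
     (auto intro!: thv_deriv[unfolded has_real_derivative_iff_has_vector_derivative]
       intro: continuous_on_subset[OF thv_cont])

lemma cos_has_int: "((\<lambda>s. cos (thv s)) has_integral (x T - x 0)) {0..T}"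
  using fundamental_theorem_of_calculus_interior_strong[of "{a,b}" 0 T xv "\<lambda>s. cos (thv s)"]
    xv_deriv[unfolded has_real_derivative_iff_has_vector_derivative] xv_cont T0 xvT xv0 by auto

lemma sin_has_int: "((\<lambda>s. sin (thv s)) has_integral (y T - y 0)) {0..T}"
  using fundamental_theorem_of_calculus_interior_strong[of "{a,b}" 0 T yv "\<lambda>s. sin (thv s)"]
    yv_deriv[unfolded has_real_derivative_iff_has_vector_derivative] yv_cont T0 yvT yv0 by auto

end

definition clp :: "real \<Rightarrow> real \<Rightarrow> real \<Rightarrow> real" where "clp p q s = max p (min s q)"

lemma clp_deriv:
  assumes "p \<le> q" "s \<noteq> p" "s \<noteq> q" and G: "(G has_real_derivative D) (at s)"
  shows "((\<lambda>z. G (clp p q z)) has_real_derivative (if p < s \<and> s < q then D else 0)) (at s)"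
proof -
  consider "s < p" | "p < s \<and> s < q" | "q < s" using assms by linarith
  then show ?thesis
  proof cases
    case 1
    have "((\<lambda>z. G p) has_real_derivative 0) (at s)" by simp
    then have "((\<lambda>z. G (clp p q z)) has_real_derivative 0) (at s)"
      by (rule has_field_derivative_transform_within_open[of _ _ _ "{..<p}"])
         (use 1 assms in \<open>auto simp: clp_def\<close>)
    then show ?thesis using 1 by simp
  next
    case 2
    have "((\<lambda>z. G (clp p q z)) has_real_derivative D) (at s)"
      by (rule has_field_derivative_transform_within_open[OF G, of "{p<..<q}"])
         (use 2 in \<open>auto simp: clp_def\<close>)
    then show ?thesis using 2 by simp
  next
    case 3
    have "((\<lambda>z. G q) has_real_derivative 0) (at s)" by simp
    then have "((\<lambda>z. G (clp p q z)) has_real_derivative 0) (at s)"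
      by (rule has_field_derivative_transform_within_open[of _ _ _ "{q<..}"])
         (use 3 assms in \<open>auto simp: clp_def\<close>)
    then show ?thesis using 3 assms by simp
  qed
qed

lemma clp_cont: "continuous_on S (clp p q)"
  unfolding clp_def[abs_def] by (intro continuous_intros)

lemma clp_in: "p \<le> q \<Longrightarrow> clp p q s \<in> {p..q}" by (auto simp: clp_def)

definition tW :: "real \<Rightarrow> real \<Rightarrow> real \<Rightarrow> real \<Rightarrow> real" where
  "tW c dl gm s = (clp (c - dl) c s - (c - dl)) / dl - (clp c (c + gm) s - c) / gm"
definition tw :: "real \<Rightarrow> real \<Rightarrow> real \<Rightarrow> real \<Rightarrow> real" where
  "tw c dl gm s = (if c - dl < s \<and> s < c then 1 / dl else 0) - (if c < s \<and> s < c + gm then 1 / gm else 0)"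

context
  fixes c dl gm :: real
  assumes dl: "0 < dl" and gm: "0 < gm"
begin

lemma tW_deriv: "s \<noteq> c - dl \<Longrightarrow> s \<noteq> c \<Longrightarrow> s \<noteq> c + gm \<Longrightarrow> (tW c dl gm has_real_derivative tw c dl gm s) (at s)"
proof -
  assume s: "s \<noteq> c - dl" "s \<noteq> c" "s \<noteq> c + gm"
  have d1: "((\<lambda>z. (z - (c - dl)) / dl) has_real_derivative 1 / dl) (at s)"
    using dl by (auto intro!: derivative_eq_intros)
  have d2: "((\<lambda>z. (z - c) / gm) has_real_derivative 1 / gm) (at s)"
    using gm by (auto intro!: derivative_eq_intros)
  have "((\<lambda>z. (clp (c - dl) c z - (c - dl)) / dl - (clp c (c + gm) z - c) / gm) has_real_derivative
     (if c - dl < s \<and> s < c then 1 / dl else 0) - (if c < s \<and> s < c + gm then 1 / gm else 0)) (at s)"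
    by (intro DERIV_diff clp_deriv[OF _ _ _ d1, simplified] clp_deriv[OF _ _ _ d2, simplified])
       (use s dl gm in auto)
  then show ?thesis unfolding tW_def[abs_def] tw_def .
qed

lemma tW_cont: "continuous_on S (tW c dl gm)"
  unfolding tW_def[abs_def] by (intro continuous_intros clp_cont) (use dl gm in auto)

lemma tw_meas: "tw c dl gm \<in> borel_measurable borel"
  unfolding tw_def[abs_def] by measurable

lemma tW_has_int: "0 \<le> s \<Longrightarrow> (tw c dl gm has_integral (tW c dl gm s - tW c dl gm 0)) {0..s}"
  by (rule fundamental_theorem_of_calculus_interior_strong[of "{c - dl, c, c + gm}"])
     (auto intro!: tW_deriv[unfolded has_real_derivative_iff_has_vector_derivative] tW_cont)

lemma tW_cases:
  "s \<le> c - dl \<Longrightarrow> tW c dl gm s = 0"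
  "c - dl \<le> s \<Longrightarrow> s \<le> c \<Longrightarrow> tW c dl gm s = (s - (c - dl)) / dl"
  "c \<le> s \<Longrightarrow> s \<le> c + gm \<Longrightarrow> tW c dl gm s = (c + gm - s) / gm"
  "c + gm \<le> s \<Longrightarrow> tW c dl gm s = 0"
  using dl gm by (auto simp: tW_def clp_def field_simps)

lemma tW_01: "0 \<le> tW c dl gm s" "tW c dl gm s \<le> 1"
proof -
  consider "s \<le> c - dl" | "c - dl \<le> s \<and> s \<le> c" | "c \<le> s \<and> s \<le> c + gm" | "c + gm \<le> s" by linarith
  then have "0 \<le> tW c dl gm s \<and> tW c dl gm s \<le> 1"
  proof cases
    case 1 then show ?thesis using tW_cases(1) by simp
  next
    case 2 then show ?thesis using tW_cases(2)[of s] dl by (simp add: divide_le_eq_1_pos)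
  next
    case 3 then show ?thesis using tW_cases(3)[of s] gm by (simp add: divide_le_eq_1_pos)
  next
    case 4 then show ?thesis using tW_cases(4) by simp
  qed
  then show "0 \<le> tW c dl gm s" "tW c dl gm s \<le> 1" by auto
qed

lemma tW_supp: "tW c dl gm s \<noteq> 0 \<Longrightarrow> c - dl < s \<and> s < c + gm"
  using tW_cases(1)[of s] tW_cases(4)[of s] by (meson not_le)

lemma tw_bound: "\<bar>tw c dl gm s\<bar> \<le> 1 / dl + 1 / gm"
  using dl gm by (auto simp: tw_def)

lemma tW_integral:
  assumes "0 < c - dl" "c + gm < T"
  shows "(tW c dl gm has_integral (dl + gm) / 2) {0..T}"
proof -
  define A where "A m = (m - c + dl)\<^sup>2 / (2 * dl)" for m
  define B where "B m = (gm\<^sup>2 - (c + gm - m)\<^sup>2) / (2 * gm)" for m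
  define Psi where "Psi s = A (clp (c - dl) c s) + B (clp c (c + gm) s)" for s
  have dA: "(A has_real_derivative (s - c + dl) / dl) (at s)" for s
    unfolding A_def[abs_def] using dl by (auto intro!: derivative_eq_intros simp: field_simps)
  have dB: "(B has_real_derivative (c + gm - s) / gm) (at s)" for s
    unfolding B_def[abs_def] using gm by (auto intro!: derivative_eq_intros simp: field_simps)
  have dP: "(Psi has_real_derivative tW c dl gm s) (at s)"
    if s: "s \<noteq> c - dl" "s \<noteq> c" "s \<noteq> c + gm" for s
  proof -
    have "(Psi has_real_derivative (if c - dl < s \<and> s < c then (s - c + dl) / dl else 0)
        + (if c < s \<and> s < c + gm then (c + gm - s) / gm else 0)) (at s)"
      unfolding Psi_def[abs_def]
      by (intro DERIV_add clp_deriv[OF _ _ _ dA] clp_deriv[OF _ _ _ dB]) (use s dl gm in auto)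
    moreover have "(if c - dl < s \<and> s < c then (s - c + dl) / dl else 0)
        + (if c < s \<and> s < c + gm then (c + gm - s) / gm else 0) = tW c dl gm s"
    proof -
      consider "s < c - dl" | "c - dl < s \<and> s < c" | "c < s \<and> s < c + gm" | "c + gm < s"
        using s by linarith
      then show ?thesis
      proof cases
        case 1 then show ?thesis using tW_cases(1)[of s] dl gm by auto
      next
        case 2 then show ?thesis using tW_cases(2)[of s] dl gm by auto
      next
        case 3 then show ?thesis using tW_cases(3)[of s] dl gm by auto
      next
        case 4 then show ?thesis using tW_cases(4)[of s] dl gm by auto
      qed
    qed
    ultimately show ?thesis by simp
  qed
  have cP: "continuous_on {0..T} Psi"
    unfolding Psi_def[abs_def] A_def B_def by (intro continuous_intros clp_cont) (use dl gm in auto)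
  have "(tW c dl gm has_integral (Psi T - Psi 0)) {0..T}"
    by (rule fundamental_theorem_of_calculus_interior_strong[of "{c - dl, c, c + gm}"])
       (use assms dl gm cP dP in \<open>auto simp: has_real_derivative_iff_has_vector_derivative[symmetric]\<close>)
  moreover have "Psi T - Psi 0 = (dl + gm) / 2"
    using assms dl gm by (simp add: Psi_def A_def B_def clp_def power2_eq_square field_simps)
  ultimately show ?thesis by simp
qed

end

lemma taylor_loc:
  fixes f f' :: "real \<Rightarrow> real"
  assumes cf: "continuous_on {p..q} f" and df: "\<And>w. p < w \<Longrightarrow> w < q \<Longrightarrow> (f has_real_derivative f' w) (at w)"
    and t: "t \<in> {p..q}" and z: "z \<in> {p..q}"
    and lf: "\<And>w. p < w \<Longrightarrow> w < q \<Longrightarrow> \<bar>f' w - f' t\<bar> \<le> M * \<bar>w - t\<bar>" and M: "0 \<le> M"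
  shows "\<bar>f z - f t - f' t * (z - t)\<bar> \<le> M * (z - t)\<^sup>2"
proof -
  define g where "g w = f w - f' t * w" for w
  have cg: "continuous_on {min t z..max t z} g"
    unfolding g_def[abs_def] using t z by (intro continuous_intros continuous_on_subset[OF cf]) auto
  have "\<bar>g z - g t\<bar> \<le> (M * \<bar>z - t\<bar>) * \<bar>z - t\<bar>"
  proof (rule lip_mvt2[OF cg, where f'="\<lambda>w. f' w - f' t"])
    show "t \<in> {min t z..max t z}" "z \<in> {min t z..max t z}" by auto
    fix w assume w: "min t z < w" "w < max t z"
    then have w': "p < w" "w < q" using t z by auto
    show "(g has_real_derivative f' w - f' t) (at w)"
      unfolding g_def[abs_def] by (auto intro!: derivative_eq_intros df[OF w'])
    have "\<bar>w - t\<bar> \<le> \<bar>z - t\<bar>" using w by (auto simp: min_def max_def split: if_splits)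
    then show "\<bar>f' w - f' t\<bar> \<le> M * \<bar>z - t\<bar>" using lf[OF w'] M by (meson mult_left_mono order_trans)
  qed
  moreover have "g z - g t = f z - f t - f' t * (z - t)" by (simp add: g_def algebra_simps)
  moreover have "(M * \<bar>z - t\<bar>) * \<bar>z - t\<bar> = M * (z - t)\<^sup>2"
    by (simp add: power2_eq_square abs_mult_self_eq mult.assoc)
  ultimately show ?thesis by simp
qed

context fw begin

definition Ub where "Ub = (SOME B. B > 0 \<and> (\<forall>s\<in>{0..T}. \<bar>u s\<bar> \<le> B))"

lemma Ub: "Ub > 0" "s \<in> {0..T} \<Longrightarrow> \<bar>u s\<bar> \<le> Ub"
proof -
  obtain B where "B > 0" "\<And>s. s \<in> {0..T} \<Longrightarrow> \<bar>u s\<bar> \<le> B" using cont_bound[OF cu] by blast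
  then have "\<exists>B. B > 0 \<and> (\<forall>s\<in>{0..T}. \<bar>u s\<bar> \<le> B)" by blast
  then have "Ub > 0 \<and> (\<forall>s\<in>{0..T}. \<bar>u s\<bar> \<le> Ub)" unfolding Ub_def by (rule someI_ex)
  then show "Ub > 0" "s \<in> {0..T} \<Longrightarrow> \<bar>u s\<bar> \<le> Ub" by auto
qed

definition Ld where "Ld = (\<bar>px\<bar> + \<bar>py\<bar>) * Ub"

lemma Ld0: "0 \<le> Ld" using Ub(1) by (simp add: Ld_def)

lemma th_lip: "s \<in> {0..T} \<Longrightarrow> z \<in> {0..T} \<Longrightarrow> \<bar>th s - th z\<bar> \<le> Ub * \<bar>s - z\<bar>"
  by (rule lip_mvt2[OF cth, where f'=u]) (auto intro: dth' Ub(2))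

lemma dd_bound: "s \<in> {0..T} \<Longrightarrow> \<bar>(px * cos (th s) + py * sin (th s)) * u s\<bar> \<le> Ld"
proof -
  assume s: "s \<in> {0..T}"
  have "\<bar>px * cos (th s) + py * sin (th s)\<bar> \<le> \<bar>px\<bar> + \<bar>py\<bar>"
  proof -
    have "\<bar>px * cos (th s)\<bar> \<le> \<bar>px\<bar>" by (simp add: abs_mult mult_left_le)
    moreover have "\<bar>py * sin (th s)\<bar> \<le> \<bar>py\<bar>" by (simp add: abs_mult mult_left_le)
    ultimately show ?thesis by linarith
  qed
  then show ?thesis unfolding abs_mult Ld_def using Ub(2)[OF s] by (intro mult_mono) auto
qed

lemma d_lip: "s \<in> {0..T} \<Longrightarrow> z \<in> {0..T} \<Longrightarrow> \<bar>d s - d z\<bar> \<le> Ld * \<bar>s - z\<bar>"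
  by (rule lip_mvt2[OF cd, where f'="\<lambda>s. (px * cos (th s) + py * sin (th s)) * u s"])
     (auto intro: dd dd_bound)

lemma th_taylor2:
  assumes c: "0 < c" "c < T" and z: "z \<in> {0..T}"
  shows "\<bar>th z - th c - u c * (z - c) - d c * (z - c)\<^sup>2 / 2\<bar> \<le> Ld * \<bar>z - c\<bar> ^ 3"
proof -
  define g where "g w = th w - u c * w - d c * (w - c)\<^sup>2 / 2" for w
  have cg: "continuous_on {min c z..max c z} g"
    unfolding g_def[abs_def] using c z by (intro continuous_intros continuous_on_subset[OF cth]) auto
  have "\<bar>g z - g c\<bar> \<le> (Ld * (z - c)\<^sup>2) * \<bar>z - c\<bar>"
  proof (rule lip_mvt2[OF cg, where f'="\<lambda>w. u w - u c - d c * (w - c)"])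
    show "c \<in> {min c z..max c z}" "z \<in> {min c z..max c z}" by auto
    fix w assume w: "min c z < w" "w < max c z"
    then have w': "0 < w" "w < T" using c z by auto
    show "(g has_real_derivative u w - u c - d c * (w - c)) (at w)"
      unfolding g_def[abs_def] by (auto intro!: derivative_eq_intros dth'[OF w'] simp: field_simps)
    have "\<bar>u w - u c - d c * (w - c)\<bar> \<le> Ld * (w - c)\<^sup>2"
      by (rule taylor_loc[OF cu, where f'=d]) (use du d_lip Ld0 w' c in auto)
    also have "\<dots> \<le> Ld * (z - c)\<^sup>2"
    proof -
      have "\<bar>w - c\<bar> \<le> \<bar>z - c\<bar>" using w by (auto simp: min_def max_def split: if_splits)
      then have "(w - c)\<^sup>2 \<le> (z - c)\<^sup>2" by (simp add: abs_le_square_iff)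
      then show ?thesis using Ld0 by (rule mult_left_mono)
    qed
    finally show "\<bar>u w - u c - d c * (w - c)\<bar> \<le> Ld * (z - c)\<^sup>2" .
  qed
  moreover have "g z - g c = th z - th c - u c * (z - c) - d c * (z - c)\<^sup>2 / 2" by (simp add: g_def algebra_simps)
  moreover have "(Ld * (z - c)\<^sup>2) * \<bar>z - c\<bar> = Ld * \<bar>z - c\<bar> ^ 3"
  proof -
    have "(z - c)\<^sup>2 = \<bar>z - c\<bar>\<^sup>2" by simp
    then show ?thesis by (simp add: power2_eq_square power3_eq_cube mult.assoc)
  qed
  ultimately show ?thesis by simp
qed

lemma cl_lip: "\<bar>cl s - cl z\<bar> \<le> \<bar>s - z\<bar>" by (auto simp: cl_def)

lemma thv_lip: "s \<in> {0..T} \<Longrightarrow> z \<in> {0..T} \<Longrightarrow> \<bar>thv s - thv z\<bar> \<le> 3 * Ub * \<bar>s - z\<bar>"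
proof -
  assume s: "s \<in> {0..T}" and z: "z \<in> {0..T}"
  have c: "cl s \<in> {0..T}" "cl z \<in> {0..T}" using cl_in[of s] cl_in[of z] ab by auto
  have "\<bar>th (cl s) - th (cl z)\<bar> \<le> Ub * \<bar>cl s - cl z\<bar>" by (rule th_lip[OF c])
  also have "\<dots> \<le> Ub * \<bar>s - z\<bar>" using cl_lip Ub(1) by (intro mult_left_mono) auto
  finally have "\<bar>th (cl s) - th (cl z)\<bar> \<le> Ub * \<bar>s - z\<bar>" .
  moreover have "\<bar>th s - th z\<bar> \<le> Ub * \<bar>s - z\<bar>" by (rule th_lip[OF s z])
  ultimately show ?thesis unfolding thv_def by simp
qed

definition Gm :: "real \<Rightarrow> real \<Rightarrow> real \<Rightarrow> real" where "Gm m1 m2 s = m2 * cos (thv s) - m1 * sin (thv s)"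

definition LG where "LG m1 m2 = (\<bar>m1\<bar> + \<bar>m2\<bar>) * (3 * Ub)"

lemma LG0: "0 \<le> LG m1 m2" using Ub(1) by (simp add: LG_def)

lemma Gm_lip: "s \<in> {0..T} \<Longrightarrow> z \<in> {0..T} \<Longrightarrow> \<bar>Gm m1 m2 s - Gm m1 m2 z\<bar> \<le> LG m1 m2 * \<bar>s - z\<bar>"
proof -
  assume s: "s \<in> {0..T}" and z: "z \<in> {0..T}"
  have "\<bar>Gm m1 m2 s - Gm m1 m2 z\<bar> = \<bar>m2 * (cos (thv s) - cos (thv z)) - m1 * (sin (thv s) - sin (thv z))\<bar>"
    by (simp add: Gm_def algebra_simps)
  also have "\<dots> \<le> \<bar>m2\<bar> * \<bar>cos (thv s) - cos (thv z)\<bar> + \<bar>m1\<bar> * \<bar>sin (thv s) - sin (thv z)\<bar>"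
    by (simp add: abs_mult[symmetric] abs_triangle_ineq4)
  also have "\<dots> \<le> \<bar>m2\<bar> * \<bar>thv s - thv z\<bar> + \<bar>m1\<bar> * \<bar>thv s - thv z\<bar>"
    using cos_lip[of "thv s" "thv z"] sin_lip[of "thv s" "thv z"]
    by (intro add_mono mult_left_mono) auto
  also have "\<dots> = (\<bar>m1\<bar> + \<bar>m2\<bar>) * \<bar>thv s - thv z\<bar>" by (simp add: algebra_simps)
  also have "\<dots> \<le> (\<bar>m1\<bar> + \<bar>m2\<bar>) * (3 * Ub * \<bar>s - z\<bar>)"
    by (intro mult_left_mono thv_lip[OF s z]) auto
  finally show ?thesis by (simp add: LG_def mult.assoc)
qed

lemma Gm_cont: "continuous_on {0..T} (Gm m1 m2)"
  unfolding Gm_def[abs_def] by (intro continuous_intros thv_cont)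

end

context fw begin

lemma ue_meas: "ue \<in> borel_measurable borel" by (rule borel_measurable_continuous_onI[OF ue_cont])

lemma v_meas: "v \<in> borel_measurable borel"
  unfolding v_def[abs_def] sg_def using ue_meas by measurable

lemma v_bound: "s \<in> {0..T} \<Longrightarrow> \<bar>v s\<bar> \<le> Ub"
  using Ub(2)[of s] by (simp add: v_def sg_def ue_eq abs_mult)

lemma v_sq: "s \<in> {0..T} \<Longrightarrow> (v s)\<^sup>2 = (u s)\<^sup>2"
  by (simp add: v_def sg_def ue_eq power_mult_distrib)

definition Fam :: "((real \<Rightarrow> real) \<times> (real \<Rightarrow> real)) set" where
  "Fam = {(tW c dl gm, tw c dl gm) | c dl gm. 0 < dl \<and> 0 < gm \<and> 0 < c - dl \<and> c + gm < T}
     \<union> {((\<lambda>s. s), (\<lambda>s. 1))}"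

definition cvec :: "(real \<Rightarrow> real) \<times> (real \<Rightarrow> real) \<Rightarrow> R4" where
  "cvec p = (integral {0..T} (\<lambda>s. - sin (thv s) * fst p s), integral {0..T} (\<lambda>s. cos (thv s) * fst p s),
     fst p T, integral {0..T} (\<lambda>s. v s * snd p s))"

definition good where
  "good p \<longleftrightarrow> continuous_on {0..T} (fst p) \<and> fst p 0 = 0 \<and> snd p \<in> borel_measurable borel \<and>
     (\<exists>K. \<forall>s\<in>{0..T}. \<bar>fst p s\<bar> \<le> K \<and> \<bar>snd p s\<bar> \<le> K) \<and>
     (\<forall>s\<in>{0..T}. (snd p has_integral fst p s) {0..s})"

lemma Fam_good: "p \<in> Fam \<Longrightarrow> good p"
proof -
  assume "p \<in> Fam"
  then consider c dl gm where "p = (tW c dl gm, tw c dl gm)" "0 < dl" "0 < gm" "0 < c - dl" "c + gm < T"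
    | "p = ((\<lambda>s. s), (\<lambda>s. 1))"
    unfolding Fam_def by blast
  then show "good p"
  proof cases
    case 1
    have W0: "tW c dl gm 0 = 0" using tW_cases(1)[OF 1(2,3), of 0] 1 by simp
    have KK: "\<forall>s\<in>{0..T}. \<bar>tW c dl gm s\<bar> \<le> 1 + (1/dl + 1/gm) \<and> \<bar>tw c dl gm s\<bar> \<le> 1 + (1/dl + 1/gm)"
    proof
      fix s
      have p: "0 < 1/dl + 1/gm" using 1(2,3) by (intro add_pos_pos) auto
      have "\<bar>tW c dl gm s\<bar> \<le> 1" using tW_01[OF 1(2,3), of c s] by simp
      moreover have "\<bar>tw c dl gm s\<bar> \<le> 1/dl + 1/gm" by (rule tw_bound[OF 1(2,3)])
      ultimately show "\<bar>tW c dl gm s\<bar> \<le> 1 + (1/dl + 1/gm) \<and> \<bar>tw c dl gm s\<bar> \<le> 1 + (1/dl + 1/gm)"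
        using p by linarith
    qed
    have HH: "(tw c dl gm has_integral tW c dl gm s) {0..s}" if "s \<in> {0..T}" for s
      using tW_has_int[OF 1(2,3), of s c] W0 that by simp
    show ?thesis unfolding good_def 1(1) fst_conv snd_conv
    proof (intro conjI)
      show "continuous_on {0..T} (tW c dl gm)" by (rule tW_cont[OF 1(2,3)])
      show "tW c dl gm 0 = 0" by (rule W0)
      show "tw c dl gm \<in> borel_measurable borel" by (rule tw_meas[OF 1(2,3)])
      show "\<exists>K. \<forall>s\<in>{0..T}. \<bar>tW c dl gm s\<bar> \<le> K \<and> \<bar>tw c dl gm s\<bar> \<le> K" using KK by blast
      show "\<forall>s\<in>{0..T}. (tw c dl gm has_integral tW c dl gm s) {0..s}" using HH by blast
    qed

  next
    case 2
    have KK: "\<forall>s\<in>{0..T}. \<bar>s\<bar> \<le> T + 1 \<and> \<bar>1::real\<bar> \<le> T + 1" using T0 by auto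
    have HH: "((\<lambda>s. 1::real) has_integral s) {0..s}" if "s \<in> {0..T}" for s
      using has_integral_const_real[of "1::real" 0 s] that by simp
    show ?thesis unfolding good_def 2 fst_conv snd_conv
    proof (intro conjI)
      show "continuous_on {0..T} (\<lambda>s::real. s)" by (rule continuous_on_id)
      show "(\<lambda>s::real. 1::real) \<in> borel_measurable borel" by simp
      show "\<exists>K. \<forall>s\<in>{0..T}. \<bar>s\<bar> \<le> K \<and> \<bar>1::real\<bar> \<le> K" using KK by blast
      show "\<forall>s\<in>{0..T}. ((\<lambda>s. 1::real) has_integral s) {0..s}" using HH by blast
    qed simp
  qed
qed

lemma inner_cvec:
  assumes "continuous_on {0..T} W"
  shows "(m1, m2, m3, m4) \<bullet> cvec (W, w) = integral {0..T} (\<lambda>s. Gm m1 m2 s * W s) + m3 * W T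
     + m4 * integral {0..T} (\<lambda>s. v s * w s)"
proof -
  have i1: "(\<lambda>s. m1 * (- sin (thv s) * W s)) integrable_on {0..T}"
    by (intro integrable_continuous_interval continuous_intros thv_cont assms)
  have i2: "(\<lambda>s. m2 * (cos (thv s) * W s)) integrable_on {0..T}"
    by (intro integrable_continuous_interval continuous_intros thv_cont assms)
  have "integral {0..T} (\<lambda>s. Gm m1 m2 s * W s) = integral {0..T} (\<lambda>s. m1 * (- sin (thv s) * W s) + m2 * (cos (thv s) * W s))"
    by (rule integral_cong) (simp add: Gm_def algebra_simps)
  also have "\<dots> = integral {0..T} (\<lambda>s. m1 * (- sin (thv s) * W s)) + integral {0..T} (\<lambda>s. m2 * (cos (thv s) * W s))"
    by (rule integral_add[OF i1 i2])
  also have "\<dots> = m1 * integral {0..T} (\<lambda>s. - sin (thv s) * W s) + m2 * integral {0..T} (\<lambda>s. cos (thv s) * W s)"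
    by (simp only: integral_mult_right)
  finally have e: "integral {0..T} (\<lambda>s. Gm m1 m2 s * W s) = m1 * integral {0..T} (\<lambda>s. - sin (thv s) * W s) + m2 * integral {0..T} (\<lambda>s. cos (thv s) * W s)" .
  show ?thesis unfolding e cvec_def fst_conv snd_conv
    by (simp only: inner_Pair inner_real_def add.assoc)
qed

lemma tent_v:
  assumes dl: "0 < dl" and gm: "0 < gm" and a1: "0 < a - dl" and a2: "a + gm < b"
  shows "integral {0..T} (\<lambda>s. v s * tw a dl gm s) = (th a - th (a - dl)) / dl + (th (a + gm) - th a) / gm"
proof -
  define Phi where "Phi s = (th (clp (a - dl) a s) - th (a - dl)) / dl + (th (clp a (a + gm) s) - th a) / gm" for s
  have c1: "continuous_on {0..T} (\<lambda>s. th (clp (a - dl) a s))"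
  proof (rule continuous_on_compose2[OF cth clp_cont])
    show "clp (a - dl) a ` {0..T} \<subseteq> {0..T}" using a1 ab dl by (auto simp: clp_def)
  qed
  have c2: "continuous_on {0..T} (\<lambda>s. th (clp a (a + gm) s))"
  proof (rule continuous_on_compose2[OF cth clp_cont])
    show "clp a (a + gm) ` {0..T} \<subseteq> {0..T}" using a2 ab gm by (auto simp: clp_def)
  qed
  have cP: "continuous_on {0..T} Phi" unfolding Phi_def[abs_def] using dl gm by (intro continuous_intros c1 c2) auto
  have dP: "(Phi has_real_derivative v s * tw a dl gm s) (at s)"
    if s: "0 < s" "s < T" "s \<noteq> a - dl" "s \<noteq> a" "s \<noteq> a + gm" "s \<noteq> b" for s
  proof -
    have D1: "((\<lambda>z. th (clp (a - dl) a z)) has_real_derivative (if a - dl < s \<and> s < a then u s else 0)) (at s)"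
      by (rule clp_deriv[OF _ _ _ dth'[OF s(1,2)]]) (use s dl in auto)
    have D2: "((\<lambda>z. th (clp a (a + gm) z)) has_real_derivative (if a < s \<and> s < a + gm then u s else 0)) (at s)"
      by (rule clp_deriv[OF _ _ _ dth'[OF s(1,2)]]) (use s gm in auto)
    have "(Phi has_real_derivative ((if a - dl < s \<and> s < a then u s else 0) - 0) / dl
        + ((if a < s \<and> s < a + gm then u s else 0) - 0) / gm) (at s)"
      unfolding Phi_def[abs_def]
      by (rule DERIV_add[OF DERIV_cdivide[OF DERIV_diff[OF D1 DERIV_const]] DERIV_cdivide[OF DERIV_diff[OF D2 DERIV_const]]])
    moreover have "(if a - dl < s \<and> s < a then u s else 0) / dl + (if a < s \<and> s < a + gm then u s else 0) / gm
        = v s * tw a dl gm s"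
      using v_eq[OF s(1,2,6)] a2 dl gm by (auto simp: tw_def)
    ultimately show ?thesis by simp
  qed
  have "((\<lambda>s. v s * tw a dl gm s) has_integral (Phi T - Phi 0)) {0..T}"
    by (rule fundamental_theorem_of_calculus_interior_strong[of "{a - dl, a, a + gm, b}"])
       (use T0 cP dP in \<open>auto simp: has_real_derivative_iff_has_vector_derivative[symmetric]\<close>)
  moreover have "Phi T - Phi 0 = (th a - th (a - dl)) / dl + (th (a + gm) - th a) / gm"
    using a1 a2 ab dl gm by (simp add: Phi_def clp_def)
  ultimately show ?thesis by (simp add: integral_unique)
qed

lemma tent_G:
  assumes dl: "0 < dl" and gm: "0 < gm" and c1: "0 < c - dl" and c2: "c + gm < T"
  shows "\<bar>integral {0..T} (\<lambda>s. Gm m1 m2 s * tW c dl gm s) - Gm m1 m2 c * ((dl + gm) / 2)\<bar>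
     \<le> LG m1 m2 * (dl + gm) * ((dl + gm) / 2)"
proof -
  define K where "K = LG m1 m2 * (dl + gm)"
  have IW: "integral {0..T} (tW c dl gm) = (dl + gm) / 2" using tW_integral[OF dl gm c1 c2] by (rule integral_unique)
  have i1: "(\<lambda>s. Gm m1 m2 s * tW c dl gm s) integrable_on {0..T}"
    by (intro integrable_continuous_interval continuous_intros Gm_cont tW_cont[OF dl gm])
  have i2: "(\<lambda>s. Gm m1 m2 c * tW c dl gm s) integrable_on {0..T}"
    by (intro integrable_continuous_interval continuous_intros tW_cont[OF dl gm])
  have i3: "(\<lambda>s. K * tW c dl gm s) integrable_on {0..T}"
    by (intro integrable_continuous_interval continuous_intros tW_cont[OF dl gm])
  have e1: "integral {0..T} (\<lambda>s. Gm m1 m2 s * tW c dl gm s - Gm m1 m2 c * tW c dl gm s)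
     = integral {0..T} (\<lambda>s. Gm m1 m2 s * tW c dl gm s) - integral {0..T} (\<lambda>s. Gm m1 m2 c * tW c dl gm s)"
    by (rule integral_diff[OF i1 i2])
  have e2: "integral {0..T} (\<lambda>s. Gm m1 m2 c * tW c dl gm s) = Gm m1 m2 c * ((dl + gm) / 2)"
    by (subst integral_mult_right) (simp only: IW)
  have e3: "integral {0..T} (\<lambda>s. K * tW c dl gm s) = K * ((dl + gm) / 2)"
    by (subst integral_mult_right) (simp only: IW)
  have pw: "norm (Gm m1 m2 s * tW c dl gm s - Gm m1 m2 c * tW c dl gm s) \<le> K * tW c dl gm s"
    if s: "s \<in> {0..T}" for s
  proof (cases "tW c dl gm s = 0")
    case True then show ?thesis by simp
  next
    case False
    then have sc: "c - dl < s" "s < c + gm" using tW_supp[OF dl gm] by auto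
    have cT: "c \<in> {0..T}" using c1 c2 dl gm by auto
    have W0: "0 \<le> tW c dl gm s" by (rule tW_01(1)[OF dl gm])
    have "\<bar>Gm m1 m2 s - Gm m1 m2 c\<bar> \<le> LG m1 m2 * \<bar>s - c\<bar>" by (rule Gm_lip[OF s cT])
    also have "\<dots> \<le> K" unfolding K_def using sc dl gm LG0 by (intro mult_left_mono) auto
    finally have "\<bar>Gm m1 m2 s - Gm m1 m2 c\<bar> * tW c dl gm s \<le> K * tW c dl gm s"
      using W0 by (rule mult_right_mono)
    moreover have "norm (Gm m1 m2 s * tW c dl gm s - Gm m1 m2 c * tW c dl gm s) = \<bar>Gm m1 m2 s - Gm m1 m2 c\<bar> * tW c dl gm s"
      using W0 by (simp add: left_diff_distrib[symmetric] abs_mult)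
    ultimately show ?thesis by simp
  qed
  have "norm (integral {0..T} (\<lambda>s. Gm m1 m2 s * tW c dl gm s - Gm m1 m2 c * tW c dl gm s))
     \<le> integral {0..T} (\<lambda>s. K * tW c dl gm s)"
    by (rule integral_norm_bound_integral[OF integrable_diff[OF i1 i2] i3 pw])
  then have "\<bar>integral {0..T} (\<lambda>s. Gm m1 m2 s * tW c dl gm s) - Gm m1 m2 c * ((dl + gm) / 2)\<bar> \<le> K * ((dl + gm) / 2)"
    unfolding e1 e2 e3 real_norm_def .
  then show ?thesis unfolding K_def .
qed

end

lemma arith1:
  fixes m4 S IG Ga LG Ld th0 th1 th2 U D e g :: real
  assumes id: "IG + m4 * S = 0"
    and hG: "\<bar>IG - Ga * ((e + g) / 2)\<bar> \<le> LG * (e + g) * ((e + g) / 2)"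
    and t1: "\<bar>th1 - th0 - U * (- e) - D * (- e)\<^sup>2 / 2\<bar> \<le> Ld * \<bar>- e\<bar> ^ 3"
    and t2: "\<bar>th2 - th0 - U * g - D * g\<^sup>2 / 2\<bar> \<le> Ld * \<bar>g\<bar> ^ 3"
    and S: "S = (th0 - th1) / e + (th2 - th0) / g"
    and e: "0 < e" and g: "0 < g" "g \<le> 2 * e" and Ld: "0 \<le> Ld" and LG: "0 \<le> LG"
  shows "\<bar>m4 * (2 * U + D * (g - e) / 2) + Ga * ((e + g) / 2)\<bar> \<le> (5 * \<bar>m4\<bar> * Ld + 9 / 2 * LG) * e\<^sup>2"
proof -
  define r1 where "r1 = th1 - th0 - U * (- e) - D * (- e)\<^sup>2 / 2"
  define r2 where "r2 = th2 - th0 - U * g - D * g\<^sup>2 / 2"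
  have a1: "\<bar>r1\<bar> \<le> Ld * e ^ 3" using t1 e unfolding r1_def by simp
  have a2: "\<bar>r2\<bar> \<le> Ld * g ^ 3" using t2 g unfolding r2_def by simp
  have s1: "(th0 - th1) / e = U - D * e / 2 - r1 / e"
    using e unfolding r1_def by (simp add: field_simps power2_eq_square)
  have s2: "(th2 - th0) / g = U + D * g / 2 + r2 / g"
    using g unfolding r2_def by (simp add: field_simps power2_eq_square)
  have b1: "\<bar>r1 / e\<bar> \<le> Ld * e\<^sup>2"
  proof -
    have "\<bar>r1 / e\<bar> = \<bar>r1\<bar> / e" using e by simp
    also have "\<dots> \<le> Ld * e ^ 3 / e" using a1 e by (simp add: divide_right_mono)
    also have "\<dots> = Ld * e\<^sup>2" using e by (simp add: power2_eq_square power3_eq_cube)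
    finally show ?thesis .
  qed
  have b2: "\<bar>r2 / g\<bar> \<le> 4 * Ld * e\<^sup>2"
  proof -
    have "\<bar>r2 / g\<bar> = \<bar>r2\<bar> / g" using g by simp
    also have "\<dots> \<le> Ld * g ^ 3 / g" using a2 g by (simp add: divide_right_mono)
    also have "\<dots> = Ld * g\<^sup>2" using g by (simp add: power2_eq_square power3_eq_cube)
    also have "\<dots> \<le> Ld * (2 * e)\<^sup>2" using g Ld by (intro mult_left_mono power_mono) auto
    also have "\<dots> = 4 * Ld * e\<^sup>2" by (simp add: power2_eq_square)
    finally show ?thesis .
  qed
  have SS: "S - (2 * U + D * (g - e) / 2) = r2 / g - r1 / e"
    unfolding S s1 s2 by (simp add: field_simps)
  have c1: "\<bar>S - (2 * U + D * (g - e) / 2)\<bar> \<le> 5 * Ld * e\<^sup>2"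
    unfolding SS using b1 b2 abs_triangle_ineq4[of "r2 / g" "r1 / e"] by linarith
  have c2: "\<bar>m4 * (S - (2 * U + D * (g - e) / 2))\<bar> \<le> \<bar>m4\<bar> * (5 * Ld * e\<^sup>2)"
    unfolding abs_mult by (rule mult_left_mono[OF c1]) simp
  have c3: "LG * (e + g) * ((e + g) / 2) \<le> 9 / 2 * LG * e\<^sup>2"
  proof -
    have "(e + g) * (e + g) \<le> (3 * e) * (3 * e)" using e g by (intro mult_mono) auto
    then have "LG * ((e + g) * (e + g)) \<le> LG * ((3 * e) * (3 * e))" using LG by (rule mult_left_mono)
    then show ?thesis by (simp add: power2_eq_square algebra_simps)
  qed
  have eq: "m4 * (2 * U + D * (g - e) / 2) + Ga * ((e + g) / 2)
      = - (m4 * (S - (2 * U + D * (g - e) / 2))) - (IG - Ga * ((e + g) / 2))"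
    using id by (simp add: algebra_simps)
  have "\<bar>m4 * (2 * U + D * (g - e) / 2) + Ga * ((e + g) / 2)\<bar>
      \<le> \<bar>m4 * (S - (2 * U + D * (g - e) / 2))\<bar> + \<bar>IG - Ga * ((e + g) / 2)\<bar>"
    unfolding eq using abs_triangle_ineq4[of "- (m4 * (S - (2 * U + D * (g - e) / 2)))" "IG - Ga * ((e + g) / 2)"]
    by (simp only: abs_minus_cancel)
  also have "\<dots> \<le> \<bar>m4\<bar> * (5 * Ld * e\<^sup>2) + 9 / 2 * LG * e\<^sup>2" using c2 hG c3 by linarith
  also have "\<dots> = (5 * \<bar>m4\<bar> * Ld + 9 / 2 * LG) * e\<^sup>2" by (simp add: algebra_simps)
  finally show ?thesis .
qed

context fw begin

lemma tent_mem: "0 < dl \<Longrightarrow> 0 < gm \<Longrightarrow> 0 < c - dl \<Longrightarrow> c + gm < T \<Longrightarrow> (tW c dl gm, tw c dl gm) \<in> Fam"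
  unfolding Fam_def by blast

lemma tent_id:
  assumes mu: "\<forall>p\<in>Fam. (m1, m2, m3, m4) \<bullet> cvec p = 0"
    and dl: "0 < dl" and gm: "0 < gm" and c1: "0 < c - dl" and c2: "c + gm < T"
  shows "integral {0..T} (\<lambda>s. Gm m1 m2 s * tW c dl gm s) + m4 * integral {0..T} (\<lambda>s. v s * tw c dl gm s) = 0"
proof -
  have "(m1, m2, m3, m4) \<bullet> cvec (tW c dl gm, tw c dl gm) = 0" using mu tent_mem[OF dl gm c1 c2] by blast
  moreover have "tW c dl gm T = 0" by (rule tW_cases(4)[OF dl gm]) (use c2 in simp)
  ultimately show ?thesis using inner_cvec[OF tW_cont[OF dl gm]] by simp
qed

lemma G_zero:
  assumes mu: "\<forall>p\<in>Fam. (m1, m2, m3, m4) \<bullet> cvec p = 0" and m4: "m4 = 0"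
    and c: "0 < c" "c < T"
  shows "Gm m1 m2 c = 0"
proof (rule zero_by_small[where dz="min c (T - c)" and C="2 * LG m1 m2"])
  show "0 < min c (T - c)" using c by simp
  fix e assume e: "0 < e" "e < min c (T - c)"
  have v1: "0 < c - e" "c + e < T" using e by auto
  have I0: "integral {0..T} (\<lambda>s. Gm m1 m2 s * tW c e e s) = 0"
    using tent_id[OF mu e(1) e(1) v1] m4 by simp
  have "\<bar>integral {0..T} (\<lambda>s. Gm m1 m2 s * tW c e e s) - Gm m1 m2 c * ((e + e) / 2)\<bar>
      \<le> LG m1 m2 * (e + e) * ((e + e) / 2)" by (rule tent_G[OF e(1) e(1) v1])
  then have "\<bar>Gm m1 m2 c\<bar> * e \<le> (2 * LG m1 m2 * e) * e" unfolding I0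
    using e(1) by (simp add: abs_mult algebra_simps)
  then show "\<bar>Gm m1 m2 c\<bar> \<le> 2 * LG m1 m2 * e" using e(1) by simp
qed

lemma uzero_contra:
  assumes m12: "m1 \<noteq> 0 \<or> m2 \<noteq> 0" and G0: "\<And>c. 0 < c \<Longrightarrow> c < a \<Longrightarrow> Gm m1 m2 c = 0"
  shows False
proof -
  have thv_eq: "thv z = th z" if "z < a" for z using that by (simp add: thv_def cl_def)
  have uz: "u z = 0" if z: "0 < z" "z < a" for z
  proof -
    have zT: "0 < z" "z < T" using z ab by auto
    define H where "H w = m2 * cos (th w) - m1 * sin (th w)" for w
    have H0: "H w = 0" if "w \<in> {0<..<a}" for w
      using G0[of w] that thv_eq[of w] by (auto simp: Gm_def H_def)
    have dH: "(H has_real_derivative - (m2 * sin (th z) + m1 * cos (th z)) * u z) (at z)"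
      unfolding H_def[abs_def] by (auto intro!: derivative_eq_intros dth'[OF zT] simp: algebra_simps)
    have dH0: "(H has_real_derivative 0) (at z)"
      by (rule has_field_derivative_transform_within_open[OF DERIV_const, of "{0<..<a}"]) (use z H0 in auto)
    have p0: "(m2 * sin (th z) + m1 * cos (th z)) * u z = 0" using DERIV_unique[OF dH dH0] by (metis mult_minus_left neg_equal_0_iff_equal)
    have "(m2 * sin (th z) + m1 * cos (th z))\<^sup>2 + (m2 * cos (th z) - m1 * sin (th z))\<^sup>2 = m1\<^sup>2 + m2\<^sup>2"
    proof -
      have "(m2 * sin (th z) + m1 * cos (th z))\<^sup>2 + (m2 * cos (th z) - m1 * sin (th z))\<^sup>2
          = (m1\<^sup>2 + m2\<^sup>2) * ((sin (th z))\<^sup>2 + (cos (th z))\<^sup>2)"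
        by algebra
      then show ?thesis by simp
    qed
    moreover have "m2 * cos (th z) - m1 * sin (th z) = 0" using H0[of z] z by (simp add: H_def)
    moreover have "m1\<^sup>2 + m2\<^sup>2 > 0" using m12 by (auto simp: add_pos_nonneg add_nonneg_pos)
    ultimately have "m2 * sin (th z) + m1 * cos (th z) \<noteq> 0" by auto
    then show ?thesis using p0 by (metis mult_eq_0_iff)
  qed
  define c where "c = a / 2"
  have c: "0 < c" "c < a" "c < T" using ab by (auto simp: c_def)
  have "(u has_real_derivative 0) (at c)"
    by (rule has_field_derivative_transform_within_open[OF DERIV_const, of "{0<..<a}"]) (use c uz in auto)
  then have "d c = 0" using DERIV_unique[OF du[OF c(1,3)]] by simp
  then show False using key[OF c(1,3) uz[OF c(1,2)]] by simp
qed

lemma lin_mem: "((\<lambda>s. s), (\<lambda>s. 1)) \<in> Fam" unfolding Fam_def by blast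

lemma m4_zero_case:
  assumes mu: "\<forall>p\<in>Fam. (m1, m2, m3, m4) \<bullet> cvec p = 0" and m4: "m4 = 0"
  shows "m1 = 0 \<and> m2 = 0 \<and> m3 = 0"
proof -
  have G0: "Gm m1 m2 c = 0" if "0 < c" "c < a" for c using G_zero[OF mu m4, of c] that ab by simp
  have m12: "m1 = 0 \<and> m2 = 0" using uzero_contra G0 by blast
  have "(m1, m2, m3, m4) \<bullet> cvec ((\<lambda>s. s), (\<lambda>s. 1)) = 0" using mu lin_mem by blast
  then have "integral {0..T} (\<lambda>s. Gm m1 m2 s * s) + m3 * T = 0"
    using inner_cvec[of "\<lambda>s. s" m1 m2 m3 m4 "\<lambda>s. 1"] m4 by (simp add: continuous_on_id)
  moreover have "Gm m1 m2 s = 0" for s using m12 by (simp add: Gm_def)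
  ultimately have "m3 * T = 0" by simp
  then show ?thesis using m12 T0 by simp
qed

lemma m4_nz_case:
  assumes mu: "\<forall>p\<in>Fam. (m1, m2, m3, m4) \<bullet> cvec p = 0" and m4: "m4 \<noteq> 0"
  shows False
proof -
  define d0 where "d0 = min a ((b - a) / 2)"
  have d0: "0 < d0" using ab by (simp add: d0_def)
  define C where "C = 5 * \<bar>m4\<bar> * Ld + 9 / 2 * LG m1 m2"
  have aT: "0 < a" "a < T" using ab by auto
  have main: "\<bar>m4 * (2 * u a + d a * (g - e) / 2) + Gm m1 m2 a * ((e + g) / 2)\<bar> \<le> C * e\<^sup>2"
    if e: "0 < e" "e < d0" and g: "g = e \<or> g = 2 * e" for e g
  proof -
    have g0: "0 < g" "g \<le> 2 * e" using e g by auto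
    have v1: "0 < a - e" "a + g < b" "a + g < T" using e g ab by (auto simp: d0_def)
    have S: "integral {0..T} (\<lambda>s. v s * tw a e g s) = (th a - th (a - e)) / e + (th (a + g) - th a) / g"
      by (rule tent_v[OF e(1) g0(1) v1(1,2)])
    have t1: "\<bar>th (a - e) - th a - u a * (- e) - d a * (- e)\<^sup>2 / 2\<bar> \<le> Ld * \<bar>- e\<bar> ^ 3"
    proof -
      have "a - e \<in> {0..T}" using v1 ab e by auto
      then show ?thesis using th_taylor2[OF aT, of "a - e"] e by simp
    qed
    have t2: "\<bar>th (a + g) - th a - u a * g - d a * g\<^sup>2 / 2\<bar> \<le> Ld * \<bar>g\<bar> ^ 3"
    proof -
      have "a + g \<in> {0..T}" using v1 ab g0 by auto
      then show ?thesis using th_taylor2[OF aT, of "a + g"] g0 by simp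
    qed
    show ?thesis unfolding C_def
      by (rule arith1[OF tent_id[OF mu e(1) g0(1) v1(1,3)] tent_G[OF e(1) g0(1) v1(1,3)] t1 t2 S e(1) g0 Ld0 LG0])
  qed
  have ua: "u a = 0"
  proof -
    have "2 * m4 * u a = 0"
    proof (rule zero_by_small[where dz=d0 and C="\<bar>Gm m1 m2 a\<bar> + C * d0"])
      show "0 < d0" by (rule d0)
      fix e assume e: "0 < e" "e < d0"
      have h: "\<bar>2 * m4 * u a + Gm m1 m2 a * e\<bar> \<le> C * e\<^sup>2"
        using main[OF e, of e] by (simp add: algebra_simps)
      have C0: "0 \<le> C" using Ld0 LG0 by (simp add: C_def)
      have "\<bar>2 * m4 * u a\<bar> \<le> \<bar>Gm m1 m2 a\<bar> * e + C * e\<^sup>2"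
        using h abs_triangle_ineq2[of "2 * m4 * u a" "- (Gm m1 m2 a * e)"] e(1)
        by (simp add: abs_mult)
      also have "\<dots> \<le> (\<bar>Gm m1 m2 a\<bar> + C * d0) * e"
        using e C0 by (simp add: power2_eq_square algebra_simps mult_left_mono mult_right_mono)
      finally show "\<bar>2 * m4 * u a\<bar> \<le> (\<bar>Gm m1 m2 a\<bar> + C * d0) * e" .
    qed
    then show ?thesis using m4 by simp
  qed
  have Ga: "Gm m1 m2 a = 0"
  proof (rule zero_by_small[where dz=d0 and C=C])
    show "0 < d0" by (rule d0)
    fix e assume e: "0 < e" "e < d0"
    have "\<bar>Gm m1 m2 a * e\<bar> \<le> C * e\<^sup>2" using main[OF e, of e] ua by (simp add: algebra_simps)
    then have "\<bar>Gm m1 m2 a\<bar> * e \<le> (C * e) * e" using e by (simp add: abs_mult power2_eq_square algebra_simps)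
    then show "\<bar>Gm m1 m2 a\<bar> \<le> C * e" using e by simp
  qed
  have da: "d a = 0"
  proof -
    have "m4 * d a / 2 = 0"
    proof (rule zero_by_small[where dz=d0 and C=C])
      show "0 < d0" by (rule d0)
      fix e assume e: "0 < e" "e < d0"
      have "\<bar>m4 * (d a * (2 * e - e) / 2)\<bar> \<le> C * e\<^sup>2" using main[OF e, of "2 * e"] ua Ga by simp
      then have "\<bar>m4 * d a / 2\<bar> * e \<le> (C * e) * e" using e
        by (simp add: abs_mult power2_eq_square algebra_simps)
      then show "\<bar>m4 * d a / 2\<bar> \<le> C * e" using e by simp
    qed
    then show ?thesis using m4 by simp
  qed
  show False using key[OF aT ua da] .
qed

lemma no_mu: "\<forall>p\<in>Fam. \<mu> \<bullet> cvec p = 0 \<Longrightarrow> \<mu> = 0"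
proof -
  assume mu: "\<forall>p\<in>Fam. \<mu> \<bullet> cvec p = 0"
  obtain m1 m2 m3 m4 where me: "\<mu> = (m1, m2, m3, m4)" by (metis prod.collapse)
  have mu': "\<forall>p\<in>Fam. (m1, m2, m3, m4) \<bullet> cvec p = 0" using mu me by simp
  have "m4 = 0" using m4_nz_case[OF mu'] by blast
  then show "\<mu> = 0" using m4_zero_case[OF mu'] me by (simp add: zero_prod_def)
qed

end

lemma sint_cong:
  fixes f g :: "real \<Rightarrow> real"
  shows "(\<And>x. x \<in> A \<Longrightarrow> f x = g x) \<Longrightarrow> (LINT x:A|M. f x) = (LINT x:A|M. g x)"
  unfolding set_lebesgue_integral_def by (rule Bochner_Integration.integral_cong) (auto simp: indicator_def)

lemma mecp_layer:
  fixes f G :: "real \<Rightarrow> real"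
  assumes T: "0 \<le> T" and f: "f \<in> borel_measurable borel" and B: "\<And>s. s \<in> {0..T} \<Longrightarrow> \<bar>f s\<bar> \<le> B"
    and G: "continuous_on {0..T} G" and fG: "\<And>s. s \<in> {0..T} \<Longrightarrow> (f has_integral (G s - G 0)) {0..s}"
  shows "\<And>s. s \<in> {0..T} \<Longrightarrow> mecp_theta thz f s = thz + G s - G 0"
    "mecp_x xz thz f T = xz + integral {0..T} (\<lambda>s. cos (thz + G s - G 0))"
    "mecp_y yz thz f T = yz + integral {0..T} (\<lambda>s. sin (thz + G s - G 0))"
    "mecp_admissible T f"
    "mecp_cost T f = integral {0..T} (\<lambda>s. (f s)\<^sup>2 / 2)"
proof -
  show th: "mecp_theta thz f s = thz + G s - G 0" if s: "s \<in> {0..T}" for s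
  proof -
    have "\<And>z. z \<in> {0..s} \<Longrightarrow> \<bar>f z\<bar> \<le> B" using B s by auto
    then have "(LINT z:{0..s}|lborel. f z) = integral {0..s} f" using meas_int(3)[OF f] by blast
    also have "\<dots> = G s - G 0" using fG[OF s] by (simp add: integral_unique)
    finally show ?thesis by (simp add: mecp_theta_def)
  qed
  have cG: "continuous_on {0..T} (\<lambda>s. thz + G s - G 0)" by (intro continuous_intros G)
  show "mecp_x xz thz f T = xz + integral {0..T} (\<lambda>s. cos (thz + G s - G 0))"
  proof -
    have "(LINT s:{0..T}|lborel. cos (mecp_theta thz f s)) = (LINT s:{0..T}|lborel. cos (thz + G s - G 0))"
      by (rule sint_cong) (simp add: th)
    also have "\<dots> = integral {0..T} (\<lambda>s. cos (thz + G s - G 0))"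
      by (rule set_borel_integral_eq_integral(2)[OF borel_integrable_atLeastAtMost'])
         (intro continuous_intros cG)
    finally show ?thesis by (simp add: mecp_x_def)
  qed
  show "mecp_y yz thz f T = yz + integral {0..T} (\<lambda>s. sin (thz + G s - G 0))"
  proof -
    have "(LINT s:{0..T}|lborel. sin (mecp_theta thz f s)) = (LINT s:{0..T}|lborel. sin (thz + G s - G 0))"
      by (rule sint_cong) (simp add: th)
    also have "\<dots> = integral {0..T} (\<lambda>s. sin (thz + G s - G 0))"
      by (rule set_borel_integral_eq_integral(2)[OF borel_integrable_atLeastAtMost'])
         (intro continuous_intros cG)
    finally show ?thesis by (simp add: mecp_y_def)
  qed
  have f2: "(\<lambda>s. (f s)\<^sup>2) \<in> borel_measurable borel" using f by measurable
  have B2: "\<bar>(f s)\<^sup>2\<bar> \<le> B\<^sup>2" if "s \<in> {0..T}" for s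
    using power_mono[OF B[OF that] abs_ge_zero, of 2] by simp
  have f3: "(\<lambda>s. (f s)\<^sup>2 / 2) \<in> borel_measurable borel" using f by measurable
  have B3: "\<bar>(f s)\<^sup>2 / 2\<bar> \<le> B\<^sup>2 / 2" if "s \<in> {0..T}" for s
    using B2[OF that] by simp
  show "mecp_admissible T f" unfolding mecp_admissible_def
    using meas_int(1)[OF f B] meas_int(1)[OF f2 B2] by simp
  show "mecp_cost T f = integral {0..T} (\<lambda>s. (f s)\<^sup>2 / 2)"
    unfolding mecp_cost_def using meas_int(3)[OF f3 B3] by simp
qed

context fw begin

lemma span_full: "span (cvec ` Fam) = UNIV"
proof -
  have "\<not> dim (cvec ` Fam) < DIM(R4)"
  proof
    assume "dim (cvec ` Fam) < DIM(R4)"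
    then obtain xx :: R4 where xx: "xx \<noteq> 0" "\<And>y. y \<in> span (cvec ` Fam) \<Longrightarrow> orthogonal xx y"
      using orthogonal_to_subspace_exists by blast
    have "\<forall>p\<in>Fam. xx \<bullet> cvec p = 0"
      using xx(2) span_base unfolding orthogonal_def by blast
    then have "xx = 0" by (rule no_mu)
    then show False using xx(1) by simp
  qed
  then have "dim (cvec ` Fam) = DIM(R4)" using dim_subset_UNIV[of "cvec ` Fam"] by simp
  then show ?thesis using dim_eq_full by blast
qed

lemma choose4:
  obtains e :: "R4 \<Rightarrow> (real \<Rightarrow> real) \<times> (real \<Rightarrow> real)"
  where "\<And>i. i \<in> Basis \<Longrightarrow> e i \<in> Fam" "surj (\<lambda>h. \<Sum>i\<in>Basis. (h \<bullet> i) *\<^sub>R cvec (e i))"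
proof -
  obtain B where B: "B \<subseteq> cvec ` Fam" "independent B" "cvec ` Fam \<subseteq> span B" "card B = dim (cvec ` Fam)"
    using basis_exists by blast
  have dimF: "dim (cvec ` Fam) = DIM(R4)" using span_full dim_eq_full by blast
  have cB: "card B = DIM(R4)" using B(4) dimF by simp
  then have fB: "finite B" using card.infinite by fastforce
  have spB: "span B = UNIV"
  proof -
    have "span (cvec ` Fam) \<subseteq> span B" using span_mono[OF B(3)] by (simp add: span_span)
    then show ?thesis using span_full by auto
  qed
  obtain f where f: "bij_betw f (Basis :: R4 set) B"
    using finite_same_card_bij[of "Basis :: R4 set" B] fB cB by auto
  define e where "e i = (SOME p. p \<in> Fam \<and> cvec p = f i)" for i
  have e: "e i \<in> Fam \<and> cvec (e i) = f i" if "i \<in> Basis" for i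
  proof -
    have "f i \<in> B" using f that by (auto simp: bij_betw_def)
    then have "f i \<in> cvec ` Fam" using B(1) by (rule rev_subsetD)
    then obtain p where "p \<in> Fam" "f i = cvec p" by (rule imageE)
    then have "\<exists>p. p \<in> Fam \<and> cvec p = f i" by metis
    then show ?thesis unfolding e_def by (rule someI_ex)
  qed
  show ?thesis
  proof (rule that[of e])
    show "\<And>i. i \<in> Basis \<Longrightarrow> e i \<in> Fam" using e by blast
    show "surj (\<lambda>h. \<Sum>i\<in>Basis. (h \<bullet> i) *\<^sub>R cvec (e i))"
    proof (rule surjI[where f="\<lambda>y. \<Sum>j\<in>Basis. (SOME k. y = (\<Sum>b\<in>B. k b *\<^sub>R b)) (f j) *\<^sub>R j"])
      fix y :: R4
      have "y \<in> span B" using spB by simp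
      then have "\<exists>k. y = (\<Sum>b\<in>B. k b *\<^sub>R b)" unfolding span_finite[OF fB] by auto
      then have ky: "y = (\<Sum>b\<in>B. (SOME k. y = (\<Sum>b\<in>B. k b *\<^sub>R b)) b *\<^sub>R b)" by (rule someI_ex)
      define k where "k = (SOME k. y = (\<Sum>b\<in>B. k b *\<^sub>R b))"
      have inn: "(\<Sum>j\<in>Basis. k (f j) *\<^sub>R j) \<bullet> i = k (f i)" if "i \<in> (Basis :: R4 set)" for i
        using that by (simp add: inner_sum_left inner_Basis if_distrib cong: if_cong)
      have "(\<Sum>i\<in>Basis. ((\<Sum>j\<in>Basis. k (f j) *\<^sub>R j) \<bullet> i) *\<^sub>R cvec (e i)) = (\<Sum>i\<in>Basis. k (f i) *\<^sub>R f i)"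
        by (rule sum.cong) (use inn e in auto)
      also have "\<dots> = (\<Sum>b\<in>B. k b *\<^sub>R b)"
        using sum.reindex_bij_betw[OF f, of "\<lambda>b. k b *\<^sub>R b"] by simp
      also have "\<dots> = y" using ky k_def by simp
      finally show "(\<Sum>i\<in>Basis. ((\<Sum>j\<in>Basis. (SOME k. y = (\<Sum>b\<in>B. k b *\<^sub>R b)) (f j) *\<^sub>R j) \<bullet> i) *\<^sub>R cvec (e i)) = y"
        unfolding k_def .
    qed
  qed
qed

end

context fw begin

lemma not_opt:
  assumes U': "\<And>s. s \<in> {0..T} \<Longrightarrow> U' s = u s"
  shows "\<not> mecp_optimal T (x 0, y 0, th 0) U'"
proof
  assume opt: "mecp_optimal T (x 0, y 0, th 0) U'"
  obtain e :: "R4 \<Rightarrow> (real \<Rightarrow> real) \<times> (real \<Rightarrow> real)" where eF: "\<And>i. i \<in> Basis \<Longrightarrow> e i \<in> Fam"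
    and es: "surj (\<lambda>h. \<Sum>i\<in>Basis. (h \<bullet> i) *\<^sub>R cvec (e i))"
    using choose4 by blast
  have gd: "good (e i)" if "i \<in> Basis" for i using Fam_good[OF eF[OF that]] .
  have "\<forall>i\<in>Basis. \<exists>K. \<forall>s\<in>{0..T}. \<bar>fst (e i) s\<bar> \<le> K \<and> \<bar>snd (e i) s\<bar> \<le> K"
  proof
    fix i :: R4 assume i: "i \<in> Basis"
    show "\<exists>K. \<forall>s\<in>{0..T}. \<bar>fst (e i) s\<bar> \<le> K \<and> \<bar>snd (e i) s\<bar> \<le> K"
      using gd[OF i] unfolding good_def by (elim conjE) assumption
  qed
  from bchoice[OF this] obtain K where K0: "\<forall>i\<in>Basis. \<forall>s\<in>{0..T}. \<bar>fst (e i) s\<bar> \<le> K i \<and> \<bar>snd (e i) s\<bar> \<le> K i"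
    by (elim exE)
  have K: "\<bar>fst (e i) s\<bar> \<le> K i \<and> \<bar>snd (e i) s\<bar> \<le> K i" if "i \<in> Basis" "s \<in> {0..T}" for i s
    using K0 that by blast
  define Kw where "Kw = (\<Sum>i\<in>(Basis :: R4 set). \<bar>K i\<bar>)"
  have Kb: "\<bar>K i\<bar> \<le> Kw" if "i \<in> Basis" for i
    unfolding Kw_def by (rule member_le_sum[OF that]) auto
  interpret P: pert T Ub Kw thv v "\<lambda>i. fst (e i)" "\<lambda>i. snd (e i)"
  proof
    show "0 < T" by (rule T0)
    show "continuous_on {0..T} thv" by (rule thv_cont)
    show "v \<in> borel_measurable borel" by (rule v_meas)
    show "\<bar>v s\<bar> \<le> Ub" if "s \<in> {0..T}" for s using v_bound[OF that] .
    show "continuous_on {0..T} (fst (e i))" if "i \<in> Basis" for i using gd[OF that] unfolding good_def by blast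
    show "snd (e i) \<in> borel_measurable borel" if "i \<in> Basis" for i using gd[OF that] unfolding good_def by blast
    show "\<bar>fst (e i) s\<bar> \<le> Kw" if "i \<in> Basis" "s \<in> {0..T}" for i s
      using K[OF that] Kb[OF that(1)] by linarith
    show "\<bar>snd (e i) s\<bar> \<le> Kw" if "i \<in> Basis" "s \<in> {0..T}" for i s
      using K[OF that] Kb[OF that(1)] by linarith
  qed
  have Leq: "P.L = (\<lambda>h. \<Sum>i\<in>Basis. (h \<bullet> i) *\<^sub>R cvec (e i))"
    by (rule ext) (simp add: P.L_def P.cv_def cvec_def)
  obtain eps where eps: "eps > 0" "\<And>yy. dist yy (P.F 0) < eps \<Longrightarrow> \<exists>h. norm h < 1 \<and> P.F h = yy"
    using P.pert_open[unfolded Leq, OF es] by blast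
  define yy where "yy = P.F 0 - (0, 0, 0, eps / 2)"
  have "dist yy (P.F 0) = eps / 2" using eps(1) by (simp add: yy_def dist_norm norm_Pair)
  then have "dist yy (P.F 0) < eps" using eps(1) by simp
  then obtain h where h: "norm h < 1" "P.F h = yy" using eps(2) by blast
  have hc: "P.F1 h = P.F1 0" "P.F2 h = P.F2 0" "P.P h T = P.P 0 T" "P.F4 h = P.F4 0 - eps / 2"
    using h(2) unfolding yy_def P.F_def by auto
  have P0: "P.P k 0 = 0" for k
    unfolding P.P_def using gd by (simp add: good_def)
  define vh where "vh s = v s + P.Q h s" for s
  define G where "G s = thv s + P.P h s" for s
  have mvh: "vh \<in> borel_measurable borel" unfolding vh_def[abs_def] using v_meas P.mQ[of h] by measurable
  have bvh: "\<bar>vh s\<bar> \<le> Ub + P.Kp * norm h" if "s \<in> {0..T}" for s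
    using v_bound[OF that] P.Qb[OF that, of h] unfolding vh_def by linarith
  have cG: "continuous_on {0..T} G" unfolding G_def[abs_def] by (intro continuous_intros thv_cont P.cP)
  have iQ: "(P.Q h has_integral P.P h s) {0..s}" if s: "s \<in> {0..T}" for s
  proof -
    have "((\<lambda>z. \<Sum>i\<in>Basis. (h \<bullet> i) * snd (e i) z) has_integral (\<Sum>i\<in>Basis. (h \<bullet> i) * fst (e i) s)) {0..s}"
    proof (rule has_integral_sum)
      fix i :: R4 assume i: "i \<in> Basis"
      have "(snd (e i) has_integral fst (e i) s) {0..s}" using gd[OF i] s unfolding good_def by blast
      then show "((\<lambda>z. (h \<bullet> i) * snd (e i) z) has_integral (h \<bullet> i) * fst (e i) s) {0..s}"
        by (rule has_integral_mult_right)
    qed simp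
    then show ?thesis unfolding P.Q_def[abs_def] P.P_def .
  qed
  have ivh: "(vh has_integral (G s - G 0)) {0..s}" if s: "s \<in> {0..T}" for s
  proof -
    have "((\<lambda>z. v z + P.Q h z) has_integral ((thv s - thv 0) + P.P h s)) {0..s}"
      by (rule has_integral_add[OF v_has_int[OF s] iQ[OF s]])
    moreover have "G s - G 0 = (thv s - thv 0) + P.P h s" using P0[of h] by (simp add: G_def)
    ultimately show ?thesis unfolding vh_def[abs_def] by simp
  qed
  note LAY = mecp_layer[OF _ mvh bvh cG ivh]
  have T0': "0 \<le> T" using T0 by simp
  have Geq: "th 0 + G s - G 0 = thv s + P.P h s" for s using P0[of h] thv0 by (simp add: G_def)
  have F10: "P.F1 0 = x T - x 0"
    unfolding P.F1_def using P0 cos_has_int by (simp add: P.P_def integral_unique)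
  have F20: "P.F2 0 = y T - y 0"
    unfolding P.F2_def using P0 sin_has_int by (simp add: P.P_def integral_unique)
  have PT0: "P.P 0 T = 0" by (simp add: P.P_def)
  have steer: "mecp_steers T (x 0, y 0, th 0) vh"
    unfolding mecp_steers_def prod.case
  proof (intro conjI)
    show "mecp_admissible T vh" using LAY(4)[OF T0'] .
    show "mecp_x (x 0) (th 0) vh T = 0"
      using LAY(2)[OF T0', where xz="x 0" and thz="th 0"] hc(1) F10 xT unfolding Geq P.F1_def by simp
    show "mecp_y (y 0) (th 0) vh T = 0"
      using LAY(3)[OF T0', where yz="y 0" and thz="th 0"] hc(2) F20 yT unfolding Geq P.F2_def by simp
    have "mecp_theta (th 0) vh T = thv T"
      using LAY(1)[OF T0', where thz="th 0" and s=T] hc(3) PT0 T0 unfolding Geq by simp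
    then show "\<exists>k::int. mecp_theta (th 0) vh T = - pi / 2 + 2 * pi * of_int k" using thvT by simp
  qed
  have cvh: "mecp_cost T vh = P.F4 0 - eps / 2"
    using LAY(5)[OF T0'] hc(4) unfolding P.F4_def vh_def[abs_def] by simp
  have cU: "mecp_cost T U' = P.F4 0"
  proof -
    have "mecp_cost T U' = (LINT s:{0..T}|lborel. (v s)\<^sup>2 / 2)"
      unfolding mecp_cost_def by (rule sint_cong) (simp add: U' v_sq)
    also have "\<dots> = integral {0..T} (\<lambda>s. (v s)\<^sup>2 / 2)"
    proof (rule meas_int(3))
      show "(\<lambda>s. (v s)\<^sup>2 / 2) \<in> borel_measurable borel" using v_meas by measurable
      show "\<bar>(v s)\<^sup>2 / 2\<bar> \<le> Ub\<^sup>2 / 2" if "s \<in> {0..T}" for s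
      proof -
        have "(v s)\<^sup>2 \<le> Ub\<^sup>2" using power_mono[OF v_bound[OF that] abs_ge_zero, of 2] by simp
        moreover have "0 \<le> (v s)\<^sup>2" by simp
        ultimately show ?thesis by simp
      qed
    qed
    also have "\<dots> = P.F4 0" unfolding P.F4_def by (simp add: P.Q0)
    finally show ?thesis .
  qed
  have "mecp_cost T U' \<le> mecp_cost T vh" using opt steer unfolding mecp_optimal_def by blast
  then show False using cU cvh eps(1) by simp
qed

end

theorem lemma2:
  fixes tf px py c0 t1 t2 :: real and X Y Th :: "real \<Rightarrow> real"
  assumes tf: "tf > 0"
    and init: "X 0 = 0" "Y 0 = 0" "Th 0 = - pi / 2"
    and odeX: "\<And>t. t \<in> {0..tf} \<Longrightarrow> (X has_real_derivative - cos (Th t)) (at t within {0..tf})"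
    and odeY: "\<And>t. t \<in> {0..tf} \<Longrightarrow> (Y has_real_derivative - sin (Th t)) (at t within {0..tf})"
    and odeTh: "\<And>t. t \<in> {0..tf} \<Longrightarrow>
        (Th has_real_derivative - (px * Y t - py * X t + c0)) (at t within {0..tf})"
    and t12: "t1 \<in> {0<..<tf}" "t2 \<in> {0<..<tf}" "t1 \<noteq> t2"
    and defined: "X t1 \<noteq> X t2" "cos (Th t1) \<noteq> 0" "cos (Th t2) \<noteq> 0"
    and colin: "(Y t1 - Y t2) / (X t1 - X t2) = tan (Th t1)" "tan (Th t1) = tan (Th t2)"
  shows "\<not> mecp_optimal tf (X tf, Y tf, Th tf) (\<lambda>t. px * Y (tf - t) - py * X (tf - t) + c0)"
proof -
  define th where "th s = Th (tf - s)" for s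
  define x where "x s = X (tf - s)" for s
  define y where "y s = Y (tf - s)" for s
  define a where "a = tf - max t1 t2"
  define b where "b = tf - min t1 t2"
  have cX: "continuous_on {0..tf} X"
    unfolding continuous_on_eq_continuous_within
  proof
    fix t assume t: "t \<in> {0..tf}"
    show "continuous (at t within {0..tf}) X" by (rule DERIV_continuous[OF odeX[OF t]])
  qed
  have cY: "continuous_on {0..tf} Y"
    unfolding continuous_on_eq_continuous_within
  proof
    fix t assume t: "t \<in> {0..tf}"
    show "continuous (at t within {0..tf}) Y" by (rule DERIV_continuous[OF odeY[OF t]])
  qed
  have cTh: "continuous_on {0..tf} Th"
    unfolding continuous_on_eq_continuous_within
  proof
    fix t assume t: "t \<in> {0..tf}"
    show "continuous (at t within {0..tf}) Th" by (rule DERIV_continuous[OF odeTh[OF t]])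
  qed
  have refl_cont: "continuous_on {0..tf} (\<lambda>s. F (tf - s))" if "continuous_on {0..tf} F" for F :: "real \<Rightarrow> real"
  proof (rule continuous_on_compose2[OF that])
    show "continuous_on {0..tf} (\<lambda>s. tf - s)" by (intro continuous_intros)
    show "(\<lambda>s. tf - s) ` {0..tf} \<subseteq> {0..tf}" by auto
  qed
  have int_at: "at t within {0..tf} = at t" if "0 < t" "t < tf" for t
    using that by (simp add: at_within_Icc_at)
  have refl_der: "((\<lambda>s. F (tf - s)) has_real_derivative - D) (at s)"
    if "0 < s" "s < tf" "(F has_real_derivative D) (at (tf - s) within {0..tf})" for F D s
  proof -
    have "(F has_real_derivative D) (at (tf - s))" using that int_at[of "tf - s"] by simp
    moreover have dg: "((\<lambda>s. tf - s) has_real_derivative -1) (at s)" by (auto intro!: derivative_eq_intros)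
    ultimately have "((\<lambda>s. F (tf - s)) has_real_derivative D * -1) (at s)"
      using DERIV_chain2[where f=F and g="\<lambda>s. tf - s" and x=s and Da=D and Db="-1"] by simp
    then show ?thesis by simp
  qed
  have sin12: "sin (Th t1 - Th t2) = 0"
  proof -
    have "sin (Th t1) / cos (Th t1) = sin (Th t2) / cos (Th t2)" using colin(2) by (simp add: tan_def)
    then have "sin (Th t1) * cos (Th t2) = sin (Th t2) * cos (Th t1)"
      using defined(2,3) by (simp add: field_simps)
    then show ?thesis by (simp add: sin_diff mult.commute)
  qed
  have ch: "(Y t1 - Y t2) * cos (Th t) = (X t1 - X t2) * sin (Th t)" if "t = t1 \<or> t = t2" for t
  proof -
    have tt: "tan (Th t) = tan (Th t1)" using that colin(2) by auto
    have ct: "cos (Th t) \<noteq> 0" using that defined by auto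
    have "(Y t1 - Y t2) = tan (Th t) * (X t1 - X t2)"
      using colin(1) tt defined(1) by (simp add: field_simps)
    then show ?thesis using ct by (simp add: tan_def field_simps)
  qed
  interpret F: fw tf px py c0 a b th x y
  proof
    show "0 < a" "a < b" "b < tf" using t12 by (auto simp: a_def b_def)
    show "continuous_on {0..tf} th" unfolding th_def by (rule refl_cont[OF cTh])
    show "continuous_on {0..tf} x" unfolding x_def by (rule refl_cont[OF cX])
    show "continuous_on {0..tf} y" unfolding y_def by (rule refl_cont[OF cY])
    fix s assume s: "0 < s" "s < tf"
    have s': "tf - s \<in> {0..tf}" using s by auto
    show "(th has_real_derivative px * y s - py * x s + c0) (at s)"
    proof -
      have "- (- (px * Y (tf - s) - py * X (tf - s) + c0)) = px * y s - py * x s + c0"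
        by (simp add: x_def y_def)
      then show ?thesis using refl_der[OF s odeTh[OF s']] unfolding th_def[abs_def] by metis
    qed
    show "(x has_real_derivative cos (th s)) (at s)"
      using refl_der[OF s odeX[OF s']] unfolding x_def[abs_def] th_def by simp
    show "(y has_real_derivative sin (th s)) (at s)"
      using refl_der[OF s odeY[OF s']] unfolding y_def[abs_def] th_def by simp
  next
    show "th tf = - pi / 2" "x tf = 0" "y tf = 0" using init by (simp_all add: th_def x_def y_def)
    have ab: "tf - a = max t1 t2" "tf - b = min t1 t2" by (simp_all add: a_def b_def)
    show "sin (th a - th b) = 0"
    proof (cases "t1 \<le> t2")
      case True
      have "sin (Th t2 - Th t1) = - sin (Th t1 - Th t2)" by (metis minus_diff_eq sin_minus)
      then show ?thesis using sin12 True by (simp add: th_def ab max_def min_def)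
    next
      case False then show ?thesis using sin12 by (simp add: th_def ab max_def min_def)
    qed
    show "(y b - y a) * cos (th a) = (x b - x a) * sin (th a)"
    proof (cases "t1 \<le> t2")
      case True
      have "(Y t1 - Y t2) * cos (Th t2) = (X t1 - X t2) * sin (Th t2)" using ch by simp
      then show ?thesis using True by (simp add: th_def x_def y_def ab max_def min_def)
    next
      case False
      have "(Y t1 - Y t2) * cos (Th t1) = (X t1 - X t2) * sin (Th t1)" using ch by simp
      then show ?thesis using False by (simp add: th_def x_def y_def ab max_def min_def algebra_simps)
    qed
    show "x a \<noteq> x b" using defined(1) t12(3)
      by (cases "t1 \<le> t2") (auto simp: x_def ab max_def min_def)
  qed
  have "\<not> mecp_optimal tf (x 0, y 0, th 0) (\<lambda>t. px * Y (tf - t) - py * X (tf - t) + c0)"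
    by (rule F.not_opt) (simp add: F.u_def x_def y_def)
  then show ?thesis by (simp add: x_def y_def th_def)
qed

end
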